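(* Let $F(s)$ be an entire function of genus zero or one. Suppose that (i) $F(s)$ is real on the real axis; (ii) there exists a real number $\sigma_0$ such that all zeros of $F$ lie in the vertical strip $\sigma_0<\Re(s)<1/2$ except for finitely many zeros; (iii) $F$ has only finitely many zeros in the half-plane $\Re(s)\geq 1/2$; (iv) there exists $C>0$ such that $N(T)\leq C T\log T$ as $T\to\infty$, where $N(T)$ is the number of zeros $\rho$ of $F$ with $0\leq \Im(\rho)<T$; (v) $F(1-\sigma)/F(\sigma)>0$ for all sufficiently large real $\sigma$, and $F(1-\sigma)/F(\sigma)\to 0$ as $\sigma\to+\infty$. Then there exist a constant $C'$, an integer $m\geq 0$ and a real number $B'\geq 0$ such that \[ F(s)= C' s^m e^{B' s}\prod_{0\neq\rho\in\mathbb{R}}\Bigl(1-\frac{s}{\rho}\Bigr)\prod_{\Im(\rho)>0}\left[\Bigl(1-\frac{s}{\rho}\Bigr)\Bigl(1-\frac{s}{\overline{\rho}}\Bigr)\right], \] where $\rho$ runs over the nonzero zeros of $F$ counted with multiplicity, and the product converges absolutely on every compact subset of $\mathbb{C}$ when the factors are grouped as in the brackets.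
   Context: An entire function has genus zero or one if it has a Hadamard factorization $e^{a+bs}s^m\prod_\rho(1-s/\rho)e^{s/\rho}$ with $\sum_\rho|\rho|^{-2}<\infty$. *)

theory Defs
  imports "HOL-Complex_Analysis.Complex_Analysis"
begin

definition zero_mult :: "(complex \<Rightarrow> complex) \<Rightarrow> complex \<Rightarrow> nat" where
  "zero_mult F \<rho> = (if F \<rho> = 0 then nat (zorder F \<rho>) else 0)"

definition nz_zeros :: "(complex \<Rightarrow> complex) \<Rightarrow> complex set" where
  "nz_zeros F = {\<rho>. F \<rho> = 0 \<and> \<rho> \<noteq> 0}"

definition set_prod_conv :: "('a \<Rightarrow> complex) \<Rightarrow> 'a set \<Rightarrow> complex \<Rightarrow> bool" where
  "set_prod_conv g A P \<longleftrightarrow> ((\<lambda>X. \<Prod>x\<in>X. g x) \<longlongrightarrow> P) (finite_subsets_at_top A)"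

text \<open>Entire function of genus zero or one: Hadamard factorization
  e^(a+bs) s^m prod_rho (1 - s/rho) e^(s/rho), with sum |rho|^(-2) finite
  (zeros counted with multiplicity).\<close>
definition genus_le_one :: "(complex \<Rightarrow> complex) \<Rightarrow> bool" where
  "genus_le_one F \<longleftrightarrow> F holomorphic_on UNIV \<and>
     (\<lambda>\<rho>. real (zero_mult F \<rho>) / (norm \<rho>)\<^sup>2) summable_on nz_zeros F \<and>
     (\<exists>(a::complex) (b::complex) (m::nat) (P::complex \<Rightarrow> complex). \<forall>s.
        set_prod_conv (\<lambda>\<rho>. ((1 - s / \<rho>) * exp (s / \<rho>)) ^ zero_mult F \<rho>) (nz_zeros F) (P s) \<and>
        F s = exp (a + b * s) * s ^ m * P s)"

definition zero_count :: "(complex \<Rightarrow> complex) \<Rightarrow> real \<Rightarrow> nat" where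
  "zero_count F T = (\<Sum>\<rho>\<in>{\<rho>. F \<rho> = 0 \<and> 0 \<le> Im \<rho> \<and> Im \<rho> < T}. zero_mult F \<rho>)"

definition upper_zeros :: "(complex \<Rightarrow> complex) \<Rightarrow> complex set" where
  "upper_zeros F = {\<rho>. F \<rho> = 0 \<and> \<rho> \<noteq> 0 \<and> Im \<rho> \<ge> 0}"

definition grouped_factor :: "(complex \<Rightarrow> complex) \<Rightarrow> complex \<Rightarrow> complex \<Rightarrow> complex" where
  "grouped_factor F s \<rho> =
     (if Im \<rho> = 0 then 1 - s / \<rho> else (1 - s / \<rho>) * (1 - s / cnj \<rho>)) ^ zero_mult F \<rho>"

end

theory Submission
  imports Defs
begin

lemma finite_by_summable_lower:
  fixes w :: "'a \<Rightarrow> real"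
  assumes "w summable_on A" "\<And>x. x \<in> A \<Longrightarrow> w x \<ge> 0" "B \<subseteq> A" "\<And>x. x \<in> B \<Longrightarrow> w x \<ge> e" "e > 0"
  shows "finite B"
proof (rule ccontr)
  assume inf: "infinite B"
  define n where "n = nat (ceiling (infsum w A / e)) + 1"
  obtain C where C: "C \<subseteq> B" "finite C" "card C = n"
    using infinite_arbitrarily_large[OF inf] by blast
  have "real n * e \<le> sum w C"
    using sum_mono[of C "\<lambda>_. e" w] C assms(4) by auto
  also have "\<dots> \<le> infsum w A"
    using finite_sum_le_infsum[OF assms(1) C(2)] C(1) assms(2,3) by auto
  finally have "real n * e \<le> infsum w A" .
  moreover have "infsum w A / e < real n"
    unfolding n_def by linarith
  ultimately show False using assms(5) by (simp add: field_simps)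
qed

lemma dominated_summable:
  fixes w :: "'a \<Rightarrow> real" and h :: "'a \<Rightarrow> 'b::banach"
  assumes "w summable_on A" "finite Fn" "\<And>x. x \<in> A - Fn \<Longrightarrow> norm (h x) \<le> c * w x"
  shows "h summable_on A"
proof -
  have "(\<lambda>x. c * w x) summable_on A" using summable_on_cmult_right[OF assms(1)] .
  hence "Infinite_Sum.abs_summable_on (\<lambda>x. c * w x) (A - Fn)"
    using summable_on_iff_abs_summable_on_real summable_on_subset_banach by blast
  moreover have "norm (norm (h x)) \<le> norm (c * w x)" if "x \<in> A - Fn" for x
  proof -
    have "norm (h x) \<le> c * w x" using assms(3) that by blast
    also have "\<dots> \<le> norm (c * w x)" by simp
    finally show ?thesis by simp
  qed
  ultimately have "(\<lambda>x. norm (norm (h x))) summable_on (A - Fn)"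
    by (rule Infinite_Sum.abs_summable_on_comparison_test)
  hence "(\<lambda>x. norm (h x)) summable_on (A - Fn)" by simp
  hence 1: "h summable_on (A - Fn)" using abs_summable_summable by blast
  have 2: "h summable_on (A \<inter> Fn)" using assms(2) by simp
  have disj: "(A - Fn) \<inter> (A \<inter> Fn) = {}" by blast
  have "h summable_on ((A - Fn) \<union> (A \<inter> Fn))" by (rule summable_on_Un_disjoint[OF 1 2 disj])
  moreover have "(A - Fn) \<union> (A \<inter> Fn) = A" by blast
  ultimately show ?thesis by simp
qed

lemma norm_power_minus_one:
  fixes z :: complex
  shows "norm (z ^ n - 1) \<le> (1 + norm (z - 1)) ^ n - 1"
proof (induction n)
  case 0 then show ?case by simp
next
  case (Suc n)
  have "z ^ Suc n - 1 = z * (z ^ n - 1) + (z - 1)" by (simp add: algebra_simps)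
  hence "norm (z ^ Suc n - 1) \<le> norm z * norm (z ^ n - 1) + norm (z - 1)"
    by (metis norm_mult norm_triangle_ineq)
  also have "norm z \<le> 1 + norm (z - 1)"
    by (metis add.commute diff_add_cancel norm_triangle_ineq norm_one)
  hence "norm z * norm (z ^ n - 1) \<le> (1 + norm (z - 1)) * ((1 + norm (z - 1)) ^ n - 1)"
    using Suc by (intro mult_mono) auto
  finally show ?case by (simp add: algebra_simps)
qed

lemma norm_prod_minus_one:
  fixes g :: "'a \<Rightarrow> complex"
  assumes "finite A" "\<And>x. x \<in> A \<Longrightarrow> norm (g x - 1) \<le> M x"
  shows "norm ((\<Prod>x\<in>A. g x) - 1) \<le> (\<Prod>x\<in>A. 1 + M x) - 1"
  using assms
proof (induction A rule: finite_induct)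
  case empty then show ?case by simp
next
  case (insert a A)
  have IH: "norm ((\<Prod>x\<in>A. g x) - 1) \<le> (\<Prod>x\<in>A. 1 + M x) - 1" using insert by auto
  have Ma: "norm (g a - 1) \<le> M a" using insert by auto
  have "(\<Prod>x\<in>insert a A. g x) - 1 = g a * ((\<Prod>x\<in>A. g x) - 1) + (g a - 1)"
    using insert by (simp add: algebra_simps)
  hence "norm ((\<Prod>x\<in>insert a A. g x) - 1) \<le> norm (g a) * norm ((\<Prod>x\<in>A. g x) - 1) + norm (g a - 1)"
    by (metis norm_mult norm_triangle_ineq)
  also have "norm (g a) \<le> 1 + M a"
    using Ma by (metis add.commute diff_add_cancel norm_triangle_ineq norm_one order_trans add_le_cancel_left)
  hence "norm (g a) * norm ((\<Prod>x\<in>A. g x) - 1) \<le> (1 + M a) * ((\<Prod>x\<in>A. 1 + M x) - 1)"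
    using IH order_trans[OF norm_ge_zero Ma] by (intro mult_mono) auto
  hence "norm (g a) * norm ((\<Prod>x\<in>A. g x) - 1) + norm (g a - 1) \<le> (1 + M a) * ((\<Prod>x\<in>A. 1 + M x) - 1) + M a"
    using Ma by linarith
  also have "\<dots> = (\<Prod>x\<in>insert a A. 1 + M x) - 1" using insert by (simp add: algebra_simps)
  finally show ?case .
qed

lemma prod_one_plus_le_exp:
  fixes M :: "'a \<Rightarrow> real"
  assumes "\<And>x. x \<in> A \<Longrightarrow> M x \<ge> 0"
  shows "(\<Prod>x\<in>A. 1 + M x) \<le> exp (\<Sum>x\<in>A. M x)"
proof (cases "finite A")
  case True
  have "(\<Prod>x\<in>A. 1 + M x) \<le> (\<Prod>x\<in>A. exp (M x))"
    using assms by (intro prod_mono) (auto simp: exp_ge_add_one_self add_increasing2)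
  then show ?thesis by (simp add: exp_sum[OF True])
qed simp

lemma exp_minus_one_le:
  fixes y :: real assumes "y \<ge> 0" shows "exp y - 1 \<le> y * exp y"
proof -
  have "1 - y \<le> exp (-y)" using exp_ge_add_one_self[of "-y"] by simp
  hence "(1 - y) * exp y \<le> exp (-y) * exp y" by (intro mult_right_mono) auto
  thus ?thesis by (simp add: exp_minus field_simps)
qed

lemma conj_sym:
  fixes F :: "complex \<Rightarrow> complex"
  assumes hol: "F holomorphic_on UNIV" and real: "\<And>x::real. F (of_real x) \<in> \<real>"
  shows "F (cnj z) = cnj (F z)"
proof -
  define f where "f = (\<lambda>z. F z - (cnj \<circ> F \<circ> cnj) z)"
  have h2: "(cnj \<circ> F \<circ> cnj) holomorphic_on UNIV"
    by (rule holomorphic_on_compose_cnj_cnj) (use hol in \<open>auto intro: holomorphic_on_subset\<close>)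
  have hf: "f holomorphic_on UNIV" unfolding f_def using hol h2 by (intro holomorphic_intros)
  have lim: "(0::complex) islimpt \<real>"
    unfolding islimpt_approachable
  proof (intro allI impI)
    fix e :: real assume "e > 0"
    show "\<exists>x'::complex\<in>\<real>. x' \<noteq> 0 \<and> dist x' 0 < e"
      by (rule bexI[of _ "of_real (e/2)"]) (use \<open>e > 0\<close> in \<open>auto simp: dist_norm\<close>)
  qed
  have fz: "f w = 0" if wR: "w \<in> \<real>" for w
  proof -
    obtain x where x: "w = of_real x" using wR by (auto elim: Reals_cases)
    have "F w \<in> \<real>" using real[of x] x by simp
    hence c1: "cnj (F w) = F w" by (simp add: Reals_cnj_iff)
    have c2: "cnj w = w" using x by simp
    show ?thesis unfolding f_def o_def c2 c1 by simp
  qed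
  have "f (cnj z) = 0"
    using analytic_continuation[OF hf open_UNIV connected_UNIV subset_UNIV UNIV_I lim fz UNIV_I] .
  then show ?thesis unfolding f_def by simp
qed

lemma not_ident_zero:
  fixes F :: "complex \<Rightarrow> complex"
  assumes fin: "finite {\<rho>. F \<rho> = 0 \<and> \<not> (\<sigma>0 < Re \<rho> \<and> Re \<rho> < 1/2)}"
  shows "\<exists>z. F z \<noteq> 0"
proof (rule ccontr)
  assume "\<not> ?thesis"
  hence "range (\<lambda>t::real. 1 + \<i> * of_real t) \<subseteq> {\<rho>. F \<rho> = 0 \<and> \<not> (\<sigma>0 < Re \<rho> \<and> Re \<rho> < 1/2)}"
    by auto
  moreover have "inj (\<lambda>t::real. 1 + \<i> * of_real t)"
    by (auto simp: inj_on_def complex_eq_iff)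
  hence "infinite (range (\<lambda>t::real. 1 + \<i> * of_real t))"
    using infinite_UNIV_char_0[where 'a=real] finite_imageD by blast
  ultimately show False using fin finite_subset by blast
qed

lemma zorder_cnj:
  fixes F :: "complex \<Rightarrow> complex"
  assumes hol: "F holomorphic_on UNIV" and sym: "\<And>z. F (cnj z) = cnj (F z)"
    and nz: "\<exists>z. F z \<noteq> 0"
  shows "zorder F (cnj \<rho>) = zorder F \<rho>"
proof -
  obtain \<beta> where \<beta>: "F \<beta> \<noteq> 0" using nz by blast
  have ev: "\<forall>\<^sub>F w in at \<rho>. F w \<noteq> 0"
    using non_zero_neighbour_alt[OF hol open_UNIV connected_UNIV _ _ \<beta>, of \<rho>] by (auto elim: eventually_mono)
  have freq: "\<exists>\<^sub>F w in at \<rho>. F w \<noteq> 0"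
    using eventually_frequently[OF _ ev] by simp
  have iso: "isolated_singularity_at F \<rho>"
    by (rule isolated_singularity_at_holomorphic[of _ UNIV]) (use hol in \<open>auto intro: holomorphic_on_subset\<close>)
  have ness: "not_essential F \<rho>"
    by (rule not_essential_holomorphic[OF hol]) auto
  define n where "n = zorder F \<rho>"
  define g where "g = zor_poly F \<rho>"
  obtain r where r: "g \<rho> \<noteq> 0" "r > 0" "g holomorphic_on cball \<rho> r"
     "\<And>w. w \<in> cball \<rho> r - {\<rho>} \<Longrightarrow> F w = g w * (w - \<rho>) powi n \<and> g w \<noteq> 0"
    using zorder_exist[OF iso ness freq] unfolding n_def g_def by blast
  have cb: "cnj ` ball (cnj \<rho>) r \<subseteq> cball \<rho> r"
  proof
    fix y assume "y \<in> cnj ` ball (cnj \<rho>) r"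
    then obtain x where x: "y = cnj x" "dist (cnj \<rho>) x < r" by auto
    have "\<rho> - cnj x = cnj (cnj \<rho> - x)" by simp
    hence "dist \<rho> y = dist (cnj \<rho>) x" unfolding x(1) dist_norm by (metis complex_mod_cnj)
    thus "y \<in> cball \<rho> r" using x by simp
  qed
  have hg: "(cnj \<circ> g \<circ> cnj) holomorphic_on ball (cnj \<rho>) r"
    by (rule holomorphic_on_compose_cnj_cnj) (use r(3) cb in \<open>auto intro: holomorphic_on_subset\<close>)
  show ?thesis
  proof (rule zorder_eqI[OF open_ball _ hg])
    show "cnj \<rho> \<in> ball (cnj \<rho>) r" using r by simp
    show "(cnj \<circ> g \<circ> cnj) (cnj \<rho>) \<noteq> 0" using r by simp
    fix w assume w: "w \<in> ball (cnj \<rho>) r" "w \<noteq> cnj \<rho>"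
    have "cnj w \<in> cnj ` ball (cnj \<rho>) r" using w(1) by blast
    hence "cnj w \<in> cball \<rho> r" using cb by blast
    moreover have "cnj w \<noteq> \<rho>" using w(2) by auto
    ultimately have "cnj w \<in> cball \<rho> r - {\<rho>}" by blast
    hence "F (cnj w) = g (cnj w) * (cnj w - \<rho>) powi n" using r(4) by blast
    hence h: "cnj (F (cnj w)) = cnj (g (cnj w)) * cnj ((cnj w - \<rho>) powi n)"
      by (simp only: complex_cnj_mult)
    have h2: "cnj ((cnj w - \<rho>) powi n) = (w - cnj \<rho>) powi n"
      by (simp only: complex_cnj_power_int complex_cnj_diff complex_cnj_cnj)
    have h3: "F w = cnj (F (cnj w))" using sym[of "cnj w"] by (simp only: complex_cnj_cnj)
    show "F w = (cnj \<circ> g \<circ> cnj) w * (w - cnj \<rho>) powi zorder F \<rho>"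
      unfolding h3 h h2 n_def[symmetric] by (simp only: o_def)
  qed
qed

lemma zero_mult_cnj:
  fixes F :: "complex \<Rightarrow> complex"
  assumes hol: "F holomorphic_on UNIV" and sym: "\<And>z. F (cnj z) = cnj (F z)"
    and nz: "\<exists>z. F z \<noteq> 0"
  shows "zero_mult F (cnj \<rho>) = zero_mult F \<rho>"
  unfolding zero_mult_def using zorder_cnj[OF assms, of \<rho>] sym[of \<rho>] by simp

lemma filterlim_fsat_map:
  assumes "\<And>Y. finite Y \<Longrightarrow> Y \<subseteq> A \<Longrightarrow> finite (\<phi> Y) \<and> \<phi> Y \<subseteq> B"
    and "\<And>X. finite X \<Longrightarrow> X \<subseteq> B \<Longrightarrow> \<exists>Y0. finite Y0 \<and> Y0 \<subseteq> A \<and> (\<forall>Y. finite Y \<and> Y0 \<subseteq> Y \<and> Y \<subseteq> A \<longrightarrow> X \<subseteq> \<phi> Y)"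
  shows "filterlim \<phi> (finite_subsets_at_top B) (finite_subsets_at_top A)"
  unfolding filterlim_iff
proof (intro allI impI)
  fix P assume "eventually P (finite_subsets_at_top B)"
  then obtain X where X: "finite X" "X \<subseteq> B" "\<And>Y. finite Y \<Longrightarrow> X \<subseteq> Y \<Longrightarrow> Y \<subseteq> B \<Longrightarrow> P Y"
    by (auto simp: eventually_finite_subsets_at_top)
  obtain Y0 where Y0: "finite Y0" "Y0 \<subseteq> A" "\<And>Y. finite Y \<Longrightarrow> Y0 \<subseteq> Y \<Longrightarrow> Y \<subseteq> A \<Longrightarrow> X \<subseteq> \<phi> Y"
    using assms(2)[OF X(1,2)] by auto
  show "eventually (\<lambda>Y. P (\<phi> Y)) (finite_subsets_at_top A)"
    unfolding eventually_finite_subsets_at_top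
  proof (intro exI[of _ Y0] conjI allI impI)
    fix Y assume Y: "finite Y \<and> Y0 \<subseteq> Y \<and> Y \<subseteq> A"
    have 1: "X \<subseteq> \<phi> Y" using Y0(3)[of Y] Y by simp
    have 2: "finite (\<phi> Y)" "\<phi> Y \<subseteq> B" using assms(1)[of Y] Y by auto
    show "P (\<phi> Y)" by (rule X(3)[OF 2(1) 1 2(2)])
  qed (use Y0 in auto)
qed

lemma unif_prod:
  fixes g :: "complex \<Rightarrow> 'a \<Rightarrow> complex"
  assumes lim: "\<And>s. s \<in> K \<Longrightarrow> ((\<lambda>Y. \<Prod>x\<in>Y. g s x) \<longlongrightarrow> P s) (finite_subsets_at_top U)"
    and Ms: "M summable_on U" and Mnn: "\<And>x. x \<in> U \<Longrightarrow> M x \<ge> 0"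
    and bd: "\<And>s x. s \<in> K \<Longrightarrow> x \<in> U \<Longrightarrow> norm (g s x - 1) \<le> M x"
  shows "uniform_limit K (\<lambda>Y s. \<Prod>x\<in>Y. g s x) P (finite_subsets_at_top U)"
  unfolding uniform_limit_iff
proof (intro allI impI)
  fix e :: real assume e: "e > 0"
  define Mt where "Mt = infsum M U"
  define \<delta> where "\<delta> = min (1/2) (e / (4 * exp Mt))"
  have \<delta>: "\<delta> > 0" "\<delta> \<le> 1/2" "\<delta> \<le> e / (4 * exp Mt)" unfolding \<delta>_def using e by auto
  have "((\<lambda>Y. sum M Y) \<longlongrightarrow> Mt) (finite_subsets_at_top U)"
    using has_sum_infsum[OF Ms] unfolding has_sum_def Mt_def .
  hence "eventually (\<lambda>Y. dist (sum M Y) Mt < \<delta>) (finite_subsets_at_top U)"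
    using \<delta>(1) tendstoD by blast
  then obtain Y0 where Y0: "finite Y0" "Y0 \<subseteq> U" "dist (sum M Y0) Mt < \<delta>"
    unfolding eventually_finite_subsets_at_top by blast
  have tot: "sum M Y \<le> Mt" if "finite Y" "Y \<subseteq> U" for Y
    unfolding Mt_def using finite_sum_le_infsum[OF Ms that] Mnn by blast
  have tail: "sum M V \<le> \<delta>" if V: "finite V" "V \<subseteq> U - Y0" for V
  proof -
    have "sum M (Y0 \<union> V) \<le> Mt" using tot[of "Y0 \<union> V"] V Y0 by auto
    moreover have "sum M (Y0 \<union> V) = sum M Y0 + sum M V"
      by (rule sum.union_disjoint) (use V Y0 in auto)
    ultimately show ?thesis using Y0(3) unfolding dist_real_def by linarith
  qed
  define Bd where "Bd = exp Mt * (exp \<delta> - 1)"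
  have "exp \<delta> \<le> 1 + 2 * \<delta>" using real_exp_bound_lemma \<delta> by auto
  hence "Bd \<le> exp Mt * (2 * \<delta>)" unfolding Bd_def by (intro mult_left_mono) auto
  also have "\<dots> \<le> exp Mt * (2 * (e / (4 * exp Mt)))" using \<delta> by (intro mult_left_mono) auto
  also have "\<dots> = e / 2" by simp
  finally have Bde: "Bd < e" using e by linarith
  have gnorm: "norm (g s x) \<le> 1 + M x" if "s \<in> K" "x \<in> U" for s x
  proof -
    have "norm (g s x) \<le> norm (g s x - 1) + norm (1::complex)"
      by (metis diff_add_cancel norm_triangle_ineq)
    thus ?thesis using bd[OF that] by simp
  qed
  show "\<forall>\<^sub>F Y in finite_subsets_at_top U. \<forall>s\<in>K. dist (\<Prod>x\<in>Y. g s x) (P s) < e"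
    unfolding eventually_finite_subsets_at_top
  proof (intro exI[of _ Y0] conjI allI impI ballI)
    fix Y s assume Y: "finite Y \<and> Y0 \<subseteq> Y \<and> Y \<subseteq> U" and s: "s \<in> K"
    have key: "norm ((\<Prod>x\<in>Z. g s x) - (\<Prod>x\<in>Y. g s x)) \<le> Bd"
      if Z: "finite Z" "Y \<subseteq> Z" "Z \<subseteq> U" for Z
    proof -
      have split: "(\<Prod>x\<in>Z. g s x) = (\<Prod>x\<in>Z - Y. g s x) * (\<Prod>x\<in>Y. g s x)"
        using prod.subset_diff[OF Z(2) Z(1)] .
      have "norm (\<Prod>x\<in>Y. g s x) = (\<Prod>x\<in>Y. norm (g s x))" by (simp add: prod_norm)
      also have "\<dots> \<le> (\<Prod>x\<in>Y. 1 + M x)"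
        by (intro prod_mono) (use gnorm s Y in auto)
      also have "\<dots> \<le> exp (sum M Y)"
        by (rule prod_one_plus_le_exp) (use Mnn Y in auto)
      also have "\<dots> \<le> exp Mt" using tot[of Y] Y by simp
      finally have n1: "norm (\<Prod>x\<in>Y. g s x) \<le> exp Mt" .
      have "norm ((\<Prod>x\<in>Z - Y. g s x) - 1) \<le> (\<Prod>x\<in>Z - Y. 1 + M x) - 1"
        by (rule norm_prod_minus_one) (use Z bd s in auto)
      also have "\<dots> \<le> exp (sum M (Z - Y)) - 1"
        using prod_one_plus_le_exp[of "Z - Y" M] Mnn Z by auto
      also have "\<dots> \<le> exp \<delta> - 1"
        using tail[of "Z - Y"] Z Y by auto
      finally have n2: "norm ((\<Prod>x\<in>Z - Y. g s x) - 1) \<le> exp \<delta> - 1" .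
      have "(\<Prod>x\<in>Z. g s x) - (\<Prod>x\<in>Y. g s x) = (\<Prod>x\<in>Y. g s x) * ((\<Prod>x\<in>Z - Y. g s x) - 1)"
        unfolding split by (simp add: algebra_simps)
      hence "norm ((\<Prod>x\<in>Z. g s x) - (\<Prod>x\<in>Y. g s x)) = norm (\<Prod>x\<in>Y. g s x) * norm ((\<Prod>x\<in>Z - Y. g s x) - 1)"
        by (simp add: norm_mult)
      also have "\<dots> \<le> exp Mt * (exp \<delta> - 1)"
        using n1 n2 by (intro mult_mono) auto
      finally show ?thesis unfolding Bd_def .
    qed
    have "dist (P s) (\<Prod>x\<in>Y. g s x) \<le> Bd"
    proof (rule tendsto_upperbound)
      show "((\<lambda>Z. dist (\<Prod>x\<in>Z. g s x) (\<Prod>x\<in>Y. g s x)) \<longlongrightarrow> dist (P s) (\<Prod>x\<in>Y. g s x)) (finite_subsets_at_top U)"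
        by (intro tendsto_dist lim s tendsto_const)
      show "\<forall>\<^sub>F Z in finite_subsets_at_top U. dist (\<Prod>x\<in>Z. g s x) (\<Prod>x\<in>Y. g s x) \<le> Bd"
        unfolding eventually_finite_subsets_at_top
        by (rule exI[of _ Y]) (use Y key in \<open>auto simp: dist_norm\<close>)
    qed simp
    thus "dist (\<Prod>x\<in>Y. g s x) (P s) < e" using Bde by (simp add: dist_commute)
  qed (use Y0 in auto)
qed

lemma inv_add_cnj:
  fixes \<rho> :: complex assumes "\<rho> \<noteq> 0"
  shows "1/\<rho> + 1/cnj \<rho> = complex_of_real (2 * Re \<rho> / (norm \<rho>)^2)"
proof -
  have c: "cnj \<rho> \<noteq> 0" using assms by simp
  have "1/\<rho> + 1/cnj \<rho> = (\<rho> + cnj \<rho>) / (\<rho> * cnj \<rho>)"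
    using assms c by (simp add: field_simps)
  also have "\<dots> = complex_of_real (2 * Re \<rho>) / complex_of_real ((norm \<rho>)^2)"
    by (simp only: complex_add_cnj complex_norm_square)
  finally show ?thesis by simp
qed

locale hf =
  fixes F :: "complex \<Rightarrow> complex" and \<sigma>0 :: real
  assumes hol: "F holomorphic_on UNIV"
    and wsum0: "(\<lambda>\<rho>. real (zero_mult F \<rho>) / (norm \<rho>)\<^sup>2) summable_on nz_zeros F"
    and realF: "\<And>x::real. F (complex_of_real x) \<in> \<real>"
    and finE0: "finite {\<rho>. F \<rho> = 0 \<and> \<not> (\<sigma>0 < Re \<rho> \<and> Re \<rho> < 1/2)}"
begin

definition "E = {\<rho>. F \<rho> = 0 \<and> \<not> (\<sigma>0 < Re \<rho> \<and> Re \<rho> < 1/2)}"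
definition "K0 = \<bar>\<sigma>0\<bar> + 1"
definition "w \<rho> = real (zero_mult F \<rho>) / (norm \<rho>)\<^sup>2"
definition "Fin = E \<union> {\<rho>. F \<rho> = 0 \<and> \<rho> \<noteq> 0 \<and> Im \<rho> = 0 \<and> zero_mult F \<rho> > 0 \<and> \<rho> \<notin> E}"
definition "t \<rho> = of_nat (zero_mult F \<rho>) * (if Im \<rho> = 0 then 1/\<rho> else 1/\<rho> + 1/cnj \<rho>)"

lemma finE: "finite E" using finE0 unfolding E_def .
lemma K0_pos: "K0 > 0" unfolding K0_def by simp
lemma nz: "\<exists>z. F z \<noteq> 0" using not_ident_zero[OF finE0] .
lemma sym: "F (cnj z) = cnj (F z)" using conj_sym[OF hol realF] .
lemma mcnj: "zero_mult F (cnj \<rho>) = zero_mult F \<rho>" using zero_mult_cnj[OF hol sym nz] .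
lemma w_nn: "w \<rho> \<ge> 0" unfolding w_def by simp
lemma w_sum: "w summable_on nz_zeros F" using wsum0 unfolding w_def .
lemma m_nonzero: "F \<rho> \<noteq> 0 \<Longrightarrow> zero_mult F \<rho> = 0" unfolding zero_mult_def by simp
lemma reK: "F \<rho> = 0 \<Longrightarrow> \<rho> \<notin> E \<Longrightarrow> \<bar>Re \<rho>\<bar> \<le> K0"
  unfolding E_def K0_def by auto

lemma Fin_fin: "finite Fin"
proof -
  define B2 where "B2 = {\<rho>. F \<rho> = 0 \<and> \<rho> \<noteq> 0 \<and> Im \<rho> = 0 \<and> zero_mult F \<rho> > 0 \<and> \<rho> \<notin> E}"
  have "finite B2"
  proof (rule finite_by_summable_lower[OF w_sum])
    show "\<And>x. x \<in> nz_zeros F \<Longrightarrow> 0 \<le> w x" using w_nn by blast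
    show "B2 \<subseteq> nz_zeros F" unfolding B2_def nz_zeros_def by auto
    show "0 < 1 / K0^2" using K0_pos by simp
    fix \<rho> assume r: "\<rho> \<in> B2"
    have n: "norm \<rho> = \<bar>Re \<rho>\<bar>" using r cmod_eq_Re unfolding B2_def by blast
    have "norm \<rho> \<le> K0" using reK[of \<rho>] r n unfolding B2_def by auto
    moreover have np: "norm \<rho> > 0" using r unfolding B2_def by auto
    ultimately have "(norm \<rho>)^2 \<le> K0^2" by (intro power_mono) auto
    moreover have "0 < K0^2 * (norm \<rho>)^2" using K0_pos np by simp
    ultimately have "1 / K0^2 \<le> 1 / (norm \<rho>)^2" by (intro divide_left_mono) auto
    also have "\<dots> \<le> w \<rho>" unfolding w_def using r np unfolding B2_def
      by (intro divide_right_mono) auto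
    finally show "1 / K0^2 \<le> w \<rho>" .
  qed
  thus ?thesis unfolding Fin_def B2_def[symmetric] using finE by simp
qed

lemma outside_Fin:
  assumes "\<rho> \<in> nz_zeros F" "\<rho> \<notin> Fin" "zero_mult F \<rho> \<noteq> 0"
  shows "Im \<rho> \<noteq> 0" "\<bar>Re \<rho>\<bar> \<le> K0" "\<rho> \<noteq> 0"
  using assms reK unfolding Fin_def nz_zeros_def by auto

lemma t_bound:
  assumes "\<rho> \<in> nz_zeros F - Fin"
  shows "norm (t \<rho>) \<le> (2 * K0) * w \<rho>"
proof (cases "zero_mult F \<rho> = 0")
  case True then show ?thesis unfolding t_def w_def by simp
next
  case False
  note o = outside_Fin[of \<rho>, OF _ _ False]
  have np: "norm \<rho> > 0" using o assms by auto
  have "t \<rho> = of_nat (zero_mult F \<rho>) * complex_of_real (2 * Re \<rho> / (norm \<rho>)^2)"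
    unfolding t_def using o assms inv_add_cnj by auto
  also have "\<dots> = complex_of_real (real (zero_mult F \<rho>) * (2 * Re \<rho> / (norm \<rho>)^2))"
    by simp
  finally have "norm (t \<rho>) = \<bar>real (zero_mult F \<rho>) * (2 * Re \<rho> / (norm \<rho>)^2)\<bar>"
    by (simp only: norm_of_real)
  also have "\<dots> = real (zero_mult F \<rho>) * (2 * \<bar>Re \<rho>\<bar> / (norm \<rho>)^2)"
    by (simp add: abs_mult)
  also have "\<dots> \<le> real (zero_mult F \<rho>) * (2 * K0 / (norm \<rho>)^2)"
    using o assms np by (intro mult_left_mono divide_right_mono) auto
  also have "\<dots> = (2 * K0) * w \<rho>" unfolding w_def by simp
  finally show ?thesis .
qed

lemma upper_sub: "upper_zeros F \<subseteq> nz_zeros F"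
  unfolding upper_zeros_def nz_zeros_def by auto

lemma t_summable: "t summable_on upper_zeros F"
proof -
  have "t summable_on nz_zeros F"
    by (rule dominated_summable[OF w_sum Fin_fin]) (rule t_bound)
  thus ?thesis using summable_on_subset_banach upper_sub by blast
qed

lemma t_real: "Im (t \<rho>) = 0"
proof (cases "\<rho> = 0")
  case True then show ?thesis unfolding t_def by simp
next
  case False
  show ?thesis
  proof (cases "Im \<rho> = 0")
    case True
    then show ?thesis unfolding t_def by (simp add: Im_divide)
  next
    case False
    then show ?thesis unfolding t_def using inv_add_cnj[OF \<open>\<rho> \<noteq> 0\<close>] by simp
  qed
qed

lemma T_real: "Im (infsum t (upper_zeros F)) = 0"
  using infsum_Im[OF t_summable] t_real by simp

end

locale hf2 = hf F \<sigma>0 for F \<sigma>0 +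
  fixes a b :: complex and m0 :: nat and Q :: "complex \<Rightarrow> complex"
  assumes prodQ: "\<And>s. set_prod_conv (\<lambda>\<rho>. ((1 - s / \<rho>) * exp (s / \<rho>)) ^ zero_mult F \<rho>) (nz_zeros F) (Q s)"
    and Feq: "\<And>s. F s = exp (a + b * s) * s ^ m0 * Q s"
begin

definition "f s \<rho> = ((1 - s / \<rho>) * exp (s / \<rho>)) ^ zero_mult F \<rho>"
definition "T = infsum t (upper_zeros F)"
definition "P s = Q s * exp (- (s * T))"

lemma perfactor:
  assumes "\<rho> \<noteq> 0"
  shows "f s \<rho> * (if Im \<rho> = 0 then 1 else f s (cnj \<rho>)) = grouped_factor F s \<rho> * exp (s * t \<rho>)"
proof (cases "Im \<rho> = 0")
  case True
  have "exp (s * t \<rho>) = exp (of_nat (zero_mult F \<rho>) * (s / \<rho>))"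
    unfolding t_def using True by (simp add: field_simps)
  also have "\<dots> = exp (s / \<rho>) ^ zero_mult F \<rho>" by (rule exp_of_nat_mult)
  finally show ?thesis unfolding f_def grouped_factor_def using True
    by (simp add: power_mult_distrib)
next
  case False
  have "exp (s * t \<rho>) = exp (of_nat (zero_mult F \<rho>) * (s / \<rho> + s / cnj \<rho>))"
    unfolding t_def using False by (simp add: field_simps)
  also have "\<dots> = exp (s / \<rho> + s / cnj \<rho>) ^ zero_mult F \<rho>" by (rule exp_of_nat_mult)
  also have "\<dots> = (exp (s / \<rho>) * exp (s / cnj \<rho>)) ^ zero_mult F \<rho>" by (simp add: exp_add)
  finally have e: "exp (s * t \<rho>) = (exp (s / \<rho>) * exp (s / cnj \<rho>)) ^ zero_mult F \<rho>" .
  show ?thesis unfolding f_def grouped_factor_def e mcnj using False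
    by (simp add: power_mult_distrib[symmetric] mult_ac)
qed

lemma cnj_upper: "\<rho> \<in> upper_zeros F \<Longrightarrow> cnj \<rho> \<in> nz_zeros F"
  unfolding upper_zeros_def nz_zeros_def using sym[of \<rho>] by auto

lemma prod_sym:
  assumes Y: "finite Y" "Y \<subseteq> upper_zeros F"
  shows "(\<Prod>\<rho>\<in>Y \<union> cnj ` Y. f s \<rho>) = (\<Prod>\<rho>\<in>Y. grouped_factor F s \<rho>) * exp (s * sum t Y)"
proof -
  define Y' where "Y' = {\<rho>\<in>Y. Im \<rho> \<noteq> 0}"
  have fY': "finite Y'" using Y unfolding Y'_def by auto
  have eq: "Y \<union> cnj ` Y = Y \<union> cnj ` Y'"
  proof
    show "Y \<union> cnj ` Y \<subseteq> Y \<union> cnj ` Y'"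
    proof
      fix x assume "x \<in> Y \<union> cnj ` Y"
      then consider "x \<in> Y" | y where "y \<in> Y" "x = cnj y" by blast
      then show "x \<in> Y \<union> cnj ` Y'"
      proof cases
        case 2
        show ?thesis
        proof (cases "Im y = 0")
          case True
          hence "cnj y = y" by (simp add: complex_eq_iff)
          thus ?thesis using 2 by simp
        next
          case False thus ?thesis using 2 unfolding Y'_def by blast
        qed
      qed simp
    qed
    show "Y \<union> cnj ` Y' \<subseteq> Y \<union> cnj ` Y" unfolding Y'_def by blast
  qed
  have disj: "Y \<inter> cnj ` Y' = {}"
  proof -
    have "Im x \<ge> 0" if "x \<in> Y" for x using that Y unfolding upper_zeros_def by auto
    moreover have "Im x < 0" if "x \<in> cnj ` Y'" for x
    proof -
      obtain y where y: "y \<in> Y" "Im y \<noteq> 0" "x = cnj y" using \<open>x \<in> cnj ` Y'\<close> unfolding Y'_def by blast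
      have "Im y \<ge> 0" using y Y unfolding upper_zeros_def by auto
      thus ?thesis using y by simp
    qed
    ultimately show ?thesis by force
  qed
  have inj: "inj_on cnj Y'" by (auto simp: inj_on_def)
  have "(\<Prod>\<rho>\<in>Y \<union> cnj ` Y. f s \<rho>) = (\<Prod>\<rho>\<in>Y. f s \<rho>) * (\<Prod>\<rho>\<in>cnj ` Y'. f s \<rho>)"
    unfolding eq by (rule prod.union_disjoint) (use Y fY' disj in auto)
  also have "(\<Prod>\<rho>\<in>cnj ` Y'. f s \<rho>) = (\<Prod>\<rho>\<in>Y'. f s (cnj \<rho>))"
    using prod.reindex[OF inj, of "f s"] by (simp add: o_def)
  also have "\<dots> = (\<Prod>\<rho>\<in>Y. if Im \<rho> \<noteq> 0 then f s (cnj \<rho>) else 1)"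
    unfolding Y'_def using prod.inter_filter[OF Y(1), of "\<lambda>\<rho>. f s (cnj \<rho>)" "\<lambda>\<rho>. Im \<rho> \<noteq> 0"]
    by simp
  also have "\<dots> = (\<Prod>\<rho>\<in>Y. if Im \<rho> = 0 then 1 else f s (cnj \<rho>))"
    by (rule prod.cong) auto
  also have "(\<Prod>\<rho>\<in>Y. f s \<rho>) * \<dots> = (\<Prod>\<rho>\<in>Y. f s \<rho> * (if Im \<rho> = 0 then 1 else f s (cnj \<rho>)))"
    by (simp add: prod.distrib)
  also have "\<dots> = (\<Prod>\<rho>\<in>Y. grouped_factor F s \<rho> * exp (s * t \<rho>))"
  proof (rule prod.cong[OF refl])
    fix x assume "x \<in> Y"
    hence "x \<noteq> 0" using Y unfolding upper_zeros_def by auto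
    thus "f s x * (if Im x = 0 then 1 else f s (cnj x)) = grouped_factor F s x * exp (s * t x)"
      by (rule perfactor)
  qed
  also have "\<dots> = (\<Prod>\<rho>\<in>Y. grouped_factor F s \<rho>) * (\<Prod>\<rho>\<in>Y. exp (s * t \<rho>))"
    by (simp add: prod.distrib)
  also have "(\<Prod>\<rho>\<in>Y. exp (s * t \<rho>)) = exp (s * sum t Y)"
    using exp_sum[OF Y(1), of "\<lambda>\<rho>. s * t \<rho>"] by (simp add: sum_distrib_left)
  finally show ?thesis .
qed

lemma filterlim_sym:
  "filterlim (\<lambda>Y. Y \<union> cnj ` Y) (finite_subsets_at_top (nz_zeros F)) (finite_subsets_at_top (upper_zeros F))"
proof (rule filterlim_fsat_map)
  fix Y assume "finite Y" "Y \<subseteq> upper_zeros F"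
  thus "finite (Y \<union> cnj ` Y) \<and> Y \<union> cnj ` Y \<subseteq> nz_zeros F"
    using cnj_upper upper_sub by auto
next
  fix X assume X: "finite X" "X \<subseteq> nz_zeros F"
  define Y0 where "Y0 = (X \<inter> upper_zeros F) \<union> cnj ` (X - upper_zeros F)"
  have sub: "cnj ` (X - upper_zeros F) \<subseteq> upper_zeros F"
  proof
    fix x assume "x \<in> cnj ` (X - upper_zeros F)"
    then obtain y where y: "y \<in> X" "y \<notin> upper_zeros F" "x = cnj y" by blast
    have "F y = 0" "y \<noteq> 0" using y X unfolding nz_zeros_def by auto
    moreover have "Im y < 0" using y(2) calculation unfolding upper_zeros_def by auto
    ultimately show "x \<in> upper_zeros F" using y(3) sym[of y] unfolding upper_zeros_def by auto
  qed
  show "\<exists>Y0. finite Y0 \<and> Y0 \<subseteq> upper_zeros F \<and> (\<forall>Y. finite Y \<and> Y0 \<subseteq> Y \<and> Y \<subseteq> upper_zeros F \<longrightarrow> X \<subseteq> Y \<union> cnj ` Y)"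
  proof (intro exI[of _ Y0] conjI allI impI)
    show "finite Y0" unfolding Y0_def using X by auto
    show "Y0 \<subseteq> upper_zeros F" unfolding Y0_def using sub by auto
    fix Y assume Y: "finite Y \<and> Y0 \<subseteq> Y \<and> Y \<subseteq> upper_zeros F"
    show "X \<subseteq> Y \<union> cnj ` Y"
    proof
      fix x assume x: "x \<in> X"
      show "x \<in> Y \<union> cnj ` Y"
      proof (cases "x \<in> upper_zeros F")
        case True thus ?thesis using x Y unfolding Y0_def by auto
      next
        case False
        hence "cnj x \<in> Y" using x Y unfolding Y0_def by auto
        hence "cnj (cnj x) \<in> cnj ` Y" by blast
        thus ?thesis by simp
      qed
    qed
  qed
qed

lemma P_lim: "((\<lambda>Y. \<Prod>\<rho>\<in>Y. grouped_factor F s \<rho>) \<longlongrightarrow> P s) (finite_subsets_at_top (upper_zeros F))"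
proof -
  have q: "((\<lambda>X. \<Prod>\<rho>\<in>X. f s \<rho>) \<longlongrightarrow> Q s) (finite_subsets_at_top (nz_zeros F))"
    using prodQ[of s] unfolding set_prod_conv_def f_def .
  have q2: "((\<lambda>Y. \<Prod>\<rho>\<in>Y \<union> cnj ` Y. f s \<rho>) \<longlongrightarrow> Q s) (finite_subsets_at_top (upper_zeros F))"
    using filterlim_compose[OF q filterlim_sym] .
  have tt: "(sum t \<longlongrightarrow> T) (finite_subsets_at_top (upper_zeros F))"
    using has_sum_infsum[OF t_summable] unfolding has_sum_def T_def .
  have "((\<lambda>Y. (\<Prod>\<rho>\<in>Y \<union> cnj ` Y. f s \<rho>) * exp (- (s * sum t Y))) \<longlongrightarrow> Q s * exp (- (s * T)))
          (finite_subsets_at_top (upper_zeros F))"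
    by (intro tendsto_intros q2 tt)
  moreover have "eventually (\<lambda>Y. (\<Prod>\<rho>\<in>Y \<union> cnj ` Y. f s \<rho>) * exp (- (s * sum t Y)) = (\<Prod>\<rho>\<in>Y. grouped_factor F s \<rho>))
          (finite_subsets_at_top (upper_zeros F))"
  proof (rule eventually_finite_subsets_at_top_weakI)
    fix Y assume "finite Y" "Y \<subseteq> upper_zeros F"
    thus "(\<Prod>\<rho>\<in>Y \<union> cnj ` Y. f s \<rho>) * exp (- (s * sum t Y)) = (\<Prod>\<rho>\<in>Y. grouped_factor F s \<rho>)"
      unfolding prod_sym[OF \<open>finite Y\<close> \<open>Y \<subseteq> upper_zeros F\<close>] by (simp add: exp_minus field_simps)
  qed
  ultimately show ?thesis unfolding P_def using tendsto_cong by force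
qed

lemma F_repr: "F s = exp a * s ^ m0 * exp ((b + T) * s) * P s"
proof -
  have "F s = exp a * exp (b * s) * s ^ m0 * Q s" using Feq[of s] by (simp add: exp_add)
  also have "Q s = P s * exp (s * T)" unfolding P_def by (simp add: exp_minus field_simps)
  finally have 1: "F s = exp a * exp (b * s) * s ^ m0 * (P s * exp (s * T))" .
  have e: "exp ((b + T) * s) = exp (b * s) * exp (s * T)"
    by (simp add: exp_add[symmetric] algebra_simps)
  show ?thesis unfolding e 1 by (simp only: mult_ac)
qed

end

context hf2 begin

definition "Dd R \<rho> = (if Im \<rho> = 0 then R / norm \<rho> else (2 * \<bar>Re \<rho>\<bar> * R + R^2) / (norm \<rho>)^2)"
definition "Mb R \<rho> = (1 + Dd R \<rho>) ^ zero_mult F \<rho> - 1"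

lemma Dd_nn: "R \<ge> 0 \<Longrightarrow> Dd R \<rho> \<ge> 0" unfolding Dd_def by auto
lemma Mb_nn: "R \<ge> 0 \<Longrightarrow> Mb R \<rho> \<ge> 0" unfolding Mb_def using Dd_nn[of R \<rho>] by simp

lemma base_bound:
  assumes "\<rho> \<noteq> 0" "norm s \<le> R"
  shows "norm ((if Im \<rho> = 0 then 1 - s / \<rho> else (1 - s / \<rho>) * (1 - s / cnj \<rho>)) - 1) \<le> Dd R \<rho>"
proof (cases "Im \<rho> = 0")
  case True
  have "norm ((1 - s / \<rho>) - 1) = norm s / norm \<rho>" by (simp add: norm_divide)
  also have "\<dots> \<le> R / norm \<rho>" using assms by (intro divide_right_mono) auto
  finally show ?thesis using True unfolding Dd_def by simp
next
  case False
  have c: "cnj \<rho> \<noteq> 0" using assms by simp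
  have "(1 - s / \<rho>) * (1 - s / cnj \<rho>) - 1 = s * s / (\<rho> * cnj \<rho>) - s * (1/\<rho> + 1/cnj \<rho>)"
    using assms c by (simp add: field_simps)
  also have "\<dots> = s * s / complex_of_real ((norm \<rho>)^2) - s * complex_of_real (2 * Re \<rho> / (norm \<rho>)^2)"
    by (simp only: inv_add_cnj[OF assms(1)] complex_norm_square)
  finally have eq: "(1 - s / \<rho>) * (1 - s / cnj \<rho>) - 1 =
     s * s / complex_of_real ((norm \<rho>)^2) - s * complex_of_real (2 * Re \<rho> / (norm \<rho>)^2)" .
  have np: "norm \<rho> > 0" using assms by simp
  have "norm ((1 - s / \<rho>) * (1 - s / cnj \<rho>) - 1) \<le>
      norm (s * s / complex_of_real ((norm \<rho>)^2)) + norm (s * complex_of_real (2 * Re \<rho> / (norm \<rho>)^2))"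
    unfolding eq by (rule norm_triangle_ineq4)
  also have "norm (s * s / complex_of_real ((norm \<rho>)^2)) = (norm s)^2 / (norm \<rho>)^2"
    by (simp add: norm_mult norm_divide power2_eq_square)
  also have "norm (s * complex_of_real (2 * Re \<rho> / (norm \<rho>)^2)) = norm s * (2 * \<bar>Re \<rho>\<bar> / (norm \<rho>)^2)"
    by (simp only: norm_mult norm_of_real) (simp add: abs_mult)
  also have "(norm s)^2 / (norm \<rho>)^2 \<le> R^2 / (norm \<rho>)^2"
    using assms by (intro divide_right_mono power_mono) auto
  also have "norm s * (2 * \<bar>Re \<rho>\<bar> / (norm \<rho>)^2) \<le> R * (2 * \<bar>Re \<rho>\<bar> / (norm \<rho>)^2)"
    using assms by (intro mult_right_mono) auto
  also have "R^2 / (norm \<rho>)^2 + R * (2 * \<bar>Re \<rho>\<bar> / (norm \<rho>)^2) = Dd R \<rho>"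
    unfolding Dd_def using False np by (simp add: field_simps)
  finally show ?thesis using False by simp
qed

lemma g_bound:
  assumes "\<rho> \<noteq> 0" "norm s \<le> R"
  shows "norm (grouped_factor F s \<rho> - 1) \<le> Mb R \<rho>"
proof -
  define z where "z = (if Im \<rho> = 0 then 1 - s / \<rho> else (1 - s / \<rho>) * (1 - s / cnj \<rho>))"
  have g: "grouped_factor F s \<rho> = z ^ zero_mult F \<rho>" unfolding grouped_factor_def z_def by simp
  have "norm (z ^ zero_mult F \<rho> - 1) \<le> (1 + norm (z - 1)) ^ zero_mult F \<rho> - 1"
    by (rule norm_power_minus_one)
  also have "(1 + norm (z - 1)) ^ zero_mult F \<rho> \<le> (1 + Dd R \<rho>) ^ zero_mult F \<rho>"
    using base_bound[OF assms] unfolding z_def by (intro power_mono) auto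
  finally show ?thesis unfolding g Mb_def by simp
qed

lemma Mb_summable:
  assumes R: "R \<ge> 0"
  shows "Mb R summable_on upper_zeros F"
proof -
  define W where "W = infsum w (nz_zeros F)"
  define A where "A = 2 * K0 * R + R^2"
  have A: "A \<ge> 0" unfolding A_def using K0_pos R by simp
  have wW: "w \<rho> \<le> W" if "\<rho> \<in> nz_zeros F" for \<rho>
    using finite_sum_le_infsum[OF w_sum, of "{\<rho>}"] that w_nn unfolding W_def by simp
  have "Mb R summable_on nz_zeros F"
  proof (rule dominated_summable[OF w_sum Fin_fin])
    fix \<rho> assume r: "\<rho> \<in> nz_zeros F - Fin"
    show "norm (Mb R \<rho>) \<le> (A * exp (A * W)) * w \<rho>"
    proof (cases "zero_mult F \<rho> = 0")
      case True then show ?thesis unfolding Mb_def w_def by simp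
    next
      case False
      note o = outside_Fin[of \<rho>, OF _ _ False]
      have np: "norm \<rho> > 0" using o r by auto
      define m where "m = real (zero_mult F \<rho>)"
      have m: "m \<ge> 0" unfolding m_def by simp
      have "Dd R \<rho> = (2 * \<bar>Re \<rho>\<bar> * R + R^2) / (norm \<rho>)^2" unfolding Dd_def using o r by auto
      also have "\<dots> \<le> A / (norm \<rho>)^2" unfolding A_def using o r R
        by (intro divide_right_mono) (auto intro!: mult_right_mono)
      finally have D1: "Dd R \<rho> \<le> A / (norm \<rho>)^2" .
      have mD: "m * Dd R \<rho> \<le> A * w \<rho>"
        using mult_left_mono[OF D1 m] unfolding w_def m_def by (simp add: field_simps)
      have D0: "Dd R \<rho> \<ge> 0" using Dd_nn[OF R] .
      have "(1 + Dd R \<rho>) ^ zero_mult F \<rho> \<le> exp (Dd R \<rho>) ^ zero_mult F \<rho>"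
        using D0 by (intro power_mono) (auto simp: exp_ge_add_one_self add.commute)
      also have "\<dots> = exp (m * Dd R \<rho>)" unfolding m_def by (simp add: exp_of_nat_mult)
      finally have "Mb R \<rho> \<le> exp (m * Dd R \<rho>) - 1" unfolding Mb_def by simp
      also have "\<dots> \<le> (m * Dd R \<rho>) * exp (m * Dd R \<rho>)"
        by (rule exp_minus_one_le) (use m D0 in simp)
      also have "\<dots> \<le> (A * w \<rho>) * exp (A * W)"
      proof (rule mult_mono)
        show "exp (m * Dd R \<rho>) \<le> exp (A * W)"
          using mD mult_left_mono[OF wW[of \<rho>] A] r by simp
      qed (use mD A w_nn[of \<rho>] in auto)
      also have "\<dots> = (A * exp (A * W)) * w \<rho>" by simp
      finally show ?thesis using Mb_nn[OF R, of \<rho>] by simp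
    qed
  qed
  thus ?thesis using summable_on_subset_banach upper_sub by blast
qed

lemma g_summable: "(\<lambda>\<rho>. norm (grouped_factor F s \<rho> - 1)) summable_on upper_zeros F"
proof (rule dominated_summable[OF Mb_summable[of "norm s"], of "{}"])
  fix \<rho> assume "\<rho> \<in> upper_zeros F - {}"
  hence "\<rho> \<noteq> 0" unfolding upper_zeros_def by auto
  thus "norm (norm (grouped_factor F s \<rho> - 1)) \<le> 1 * Mb (norm s) \<rho>"
    using g_bound[of \<rho> s "norm s"] by simp
qed auto

lemma g_unif:
  assumes "compact K"
  shows "uniform_limit K (\<lambda>X s. \<Prod>\<rho>\<in>X. grouped_factor F s \<rho>) P (finite_subsets_at_top (upper_zeros F))"
proof -
  obtain R0 where R0: "\<And>s. s \<in> K \<Longrightarrow> norm s \<le> R0"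
    using compact_imp_bounded[OF assms] unfolding bounded_iff by blast
  define R where "R = max R0 0"
  have R: "R \<ge> 0" "\<And>s. s \<in> K \<Longrightarrow> norm s \<le> R" unfolding R_def using R0 by force+
  show ?thesis
  proof (rule unif_prod[OF P_lim Mb_summable[OF R(1)]])
    show "\<And>x. x \<in> upper_zeros F \<Longrightarrow> 0 \<le> Mb R x" using Mb_nn[OF R(1)] by blast
    fix s x assume "s \<in> K" "x \<in> upper_zeros F"
    thus "norm (grouped_factor F s x - 1) \<le> Mb R x"
      using g_bound[of x s R] R unfolding upper_zeros_def by auto
  qed
qed

end

context hf2 begin

lemma gf_real: "grouped_factor F (of_real x) \<rho> \<in> \<real>"
proof (cases "Im \<rho> = 0")
  case True
  hence "\<rho> \<in> \<real>" by (simp add: complex_is_Real_iff)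
  hence "1 - of_real x / \<rho> \<in> \<real>" by (intro Reals_diff Reals_divide) auto
  thus ?thesis unfolding grouped_factor_def using True by (intro Reals_power) simp
next
  case False
  define u where "u = 1 - of_real x / \<rho>"
  have "cnj u = 1 - of_real x / cnj \<rho>" unfolding u_def by simp
  hence "(1 - of_real x / \<rho>) * (1 - of_real x / cnj \<rho>) = u * cnj u" unfolding u_def by simp
  also have "\<dots> = complex_of_real ((norm u)^2)" by (rule complex_norm_square[symmetric])
  finally have "(1 - of_real x / \<rho>) * (1 - of_real x / cnj \<rho>) \<in> \<real>" by simp
  thus ?thesis unfolding grouped_factor_def using False by (intro Reals_power) simp
qed

lemma P_real: "Im (P (of_real x)) = 0"
proof -
  have "((\<lambda>Y. Im (\<Prod>\<rho>\<in>Y. grouped_factor F (of_real x) \<rho>)) \<longlongrightarrow> Im (P (of_real x)))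
          (finite_subsets_at_top (upper_zeros F))"
    by (intro tendsto_Im P_lim)
  moreover have "\<And>Y. Im (\<Prod>\<rho>\<in>Y. grouped_factor F (of_real x) \<rho>) = 0"
    using prod_in_Reals[of _ "grouped_factor F (of_real x)"] gf_real by (simp add: complex_is_Real_iff)
  ultimately have "((\<lambda>Y. 0) \<longlongrightarrow> Im (P (of_real x))) (finite_subsets_at_top (upper_zeros F))"
    by simp
  moreover have nt: "\<not> trivial_limit (finite_subsets_at_top (upper_zeros F))" by (simp only: eventually_False finite_subsets_at_top_neq_bot not_False_eq_True)
  ultimately show ?thesis using tendsto_unique[OF nt _ tendsto_const] by metis
qed

lemma c_real:
  assumes ev: "\<forall>\<^sub>F \<sigma> in at_top. F (of_real \<sigma>) \<noteq> 0"
  shows "Im (b + T) = 0"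
proof (rule ccontr)
  define c where "c = b + T"
  assume nz: "Im (b + T) \<noteq> 0"
  hence nzc: "Im c \<noteq> 0" unfolding c_def .
  obtain X where X: "\<And>\<sigma>. \<sigma> \<ge> X \<Longrightarrow> F (of_real \<sigma>) \<noteq> 0"
    using ev unfolding eventually_at_top_linorder by blast
  have sin0: "sin (Im a + Im c * x) = 0" if x: "x \<ge> max X 1" for x
  proof -
    have Fx: "F (of_real x) \<noteq> 0" using X x by auto
    have rep: "F (of_real x) = exp (a + c * of_real x) * ((of_real x) ^ m0 * P (of_real x))"
      using F_repr[of "of_real x"] unfolding c_def by (simp add: exp_add mult_ac)
    have Pnz: "P (of_real x) \<noteq> 0" using Fx rep by auto
    have xnz: "(of_real x :: complex) ^ m0 \<noteq> 0" using x by auto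
    have "exp (a + c * of_real x) = F (of_real x) / ((of_real x) ^ m0 * P (of_real x))"
      using rep Pnz xnz by (simp add: field_simps)
    moreover have "P (of_real x) \<in> \<real>" using P_real by (simp add: complex_is_Real_iff)
    ultimately have "exp (a + c * of_real x) \<in> \<real>" using realF[of x]
      by (metis Reals_divide Reals_mult Reals_of_real Reals_power)
    hence "Im (exp (a + c * of_real x)) = 0" by (simp add: complex_is_Real_iff)
    thus ?thesis by (simp add: Im_exp)
  qed
  define x1 where "x1 = max X 1"
  define \<theta> where "\<theta> = Im a + Im c * x1"
  have s1: "sin \<theta> = 0" unfolding \<theta>_def x1_def by (rule sin0) simp
  define d where "d = pi / (2 * \<bar>Im c\<bar>)"
  have d: "d > 0" unfolding d_def using nzc by simp
  have "sin (Im a + Im c * (x1 + d)) = 0" by (rule sin0) (use d in \<open>simp add: x1_def\<close>)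
  moreover have "Im a + Im c * (x1 + d) = \<theta> + Im c * d" unfolding \<theta>_def by (simp add: algebra_simps)
  ultimately have s2: "sin (\<theta> + Im c * d) = 0" by simp
  have "cos \<theta> = 0"
  proof (cases "Im c > 0")
    case True
    hence eq: "Im c * d = pi / 2" unfolding d_def by simp
    have "sin (\<theta> + pi / 2) = 0" using s2 unfolding eq .
    thus ?thesis by (simp add: sin_add)
  next
    case False
    hence "Im c < 0" using nzc by simp
    hence eq: "Im c * d = - (pi / 2)" unfolding d_def by (simp add: field_simps)
    have "sin (\<theta> + - (pi / 2)) = 0" using s2 unfolding eq .
    thus ?thesis by (simp add: sin_diff)
  qed
  thus False using s1 sin_cos_squared_add[of \<theta>] by simp
qed

end

lemma pow_lb:
  fixes q :: real
  assumes "q \<ge> 0" "k \<ge> 1" "k \<le> 2"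
  shows "(min 1 q) ^ (2 * m) \<le> q ^ (k * m)"
proof -
  have "(min 1 q) ^ (2 * m) \<le> (min 1 q) ^ (k * m)"
    by (rule power_decreasing) (use assms in auto)
  also have "\<dots> \<le> q ^ (k * m)" by (rule power_mono) (use assms in auto)
  finally show ?thesis .
qed

context hf2 begin

definition "kk \<rho> = (if Im \<rho> = 0 then 1 else (2::nat))"
definition "Dc = 20 * K0"
definition "ws \<sigma> \<rho> = real (zero_mult F \<rho>) / (\<sigma>^2 + (norm \<rho>)^2)"
definition "W \<sigma> = infsum (ws \<sigma>) (nz_zeros F)"
definition "cE = (\<Prod>\<rho>\<in>E \<inter> upper_zeros F. (1/16::real) ^ zero_mult F \<rho>)"
definition "\<sigma>S = max (2 * (1 - \<sigma>0)) (2 * K0)"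
definition "\<sigma>2 = max \<sigma>S (\<Sum>\<rho>\<in>E. 2 * (norm \<rho> + 1))"

lemma norm_1_minus:
  fixes \<rho> s :: complex
  assumes "\<rho> \<noteq> 0" shows "norm (1 - s / \<rho>) = norm (\<rho> - s) / norm \<rho>"
proof -
  have "1 - s / \<rho> = (\<rho> - s) / \<rho>" using assms by (simp add: diff_divide_distrib)
  thus ?thesis by (simp add: norm_divide)
qed

lemma norm_gf:
  assumes "\<rho> \<noteq> 0"
  shows "norm (grouped_factor F (of_real x) \<rho>) = (norm (\<rho> - of_real x) / norm \<rho>) ^ (kk \<rho> * zero_mult F \<rho>)"
proof (cases "Im \<rho> = 0")
  case True
  thus ?thesis unfolding grouped_factor_def kk_def using norm_1_minus[OF assms] by (simp add: norm_power)
next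
  case False
  have "1 - of_real x / cnj \<rho> = cnj (1 - of_real x / \<rho>)" by simp
  hence "norm (1 - of_real x / cnj \<rho>) = norm (1 - of_real x / \<rho>)" by (metis complex_mod_cnj)
  hence "norm ((1 - of_real x / \<rho>) * (1 - of_real x / cnj \<rho>)) = (norm (\<rho> - of_real x) / norm \<rho>) ^ 2"
    using norm_1_minus[OF assms] by (simp add: norm_mult power2_eq_square)
  thus ?thesis unfolding grouped_factor_def kk_def using False
    by (simp add: norm_power power_mult)
qed

lemma ratio_factor:
  assumes "\<rho> \<noteq> 0" "norm (\<rho> - of_real x) > 0"
  shows "norm (grouped_factor F (of_real y) \<rho>) \<ge>
           (min 1 (norm (\<rho> - of_real y) / norm (\<rho> - of_real x))) ^ (2 * zero_mult F \<rho>) * norm (grouped_factor F (of_real x) \<rho>)"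
proof -
  define q where "q = norm (\<rho> - of_real y) / norm (\<rho> - of_real x)"
  define n where "n = kk \<rho> * zero_mult F \<rho>"
  define r where "r = norm (\<rho> - of_real x) / norm \<rho>"
  have np: "norm \<rho> > 0" using assms by simp
  have qr: "norm (\<rho> - of_real y) / norm \<rho> = q * r" unfolding q_def r_def using assms by simp
  have "norm (grouped_factor F (of_real y) \<rho>) = (q * r) ^ n"
    unfolding norm_gf[OF assms(1)] qr n_def ..
  also have "\<dots> = q ^ n * r ^ n" by (rule power_mult_distrib)
  also have "r ^ n = norm (grouped_factor F (of_real x) \<rho>)"
    unfolding norm_gf[OF assms(1)] n_def r_def ..
  finally have eq: "norm (grouped_factor F (of_real y) \<rho>) = q ^ n * norm (grouped_factor F (of_real x) \<rho>)" .
  have "(min 1 q) ^ (2 * zero_mult F \<rho>) \<le> q ^ n"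
    unfolding n_def by (rule pow_lb) (auto simp: q_def kk_def)
  thus ?thesis unfolding eq q_def[symmetric] by (intro mult_right_mono) auto
qed

lemma ell_E:
  assumes "\<rho> \<noteq> 0" "\<sigma> \<ge> 2 * (norm \<rho> + 1)"
  shows "norm (\<rho> - complex_of_real \<sigma>) > 0"
    "(min 1 (norm (\<rho> - complex_of_real (1 - \<sigma>)) / norm (\<rho> - complex_of_real \<sigma>))) ^ (2 * m) \<ge> (1/16) ^ m"
proof -
  have s: "\<sigma> > 0" using assms(2) by (smt (verit) norm_ge_zero)
  have "norm (complex_of_real \<sigma>) \<le> norm \<rho> + norm (\<rho> - complex_of_real \<sigma>)"
    by (metis add_diff_cancel_left' diff_diff_eq2 norm_triangle_ineq4 add.commute)
  hence den1: "norm (\<rho> - complex_of_real \<sigma>) \<ge> \<sigma> - norm \<rho>" using s by simp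
  thus dpos: "norm (\<rho> - complex_of_real \<sigma>) > 0" using assms(2) by (smt (verit) norm_ge_zero)
  have den2: "norm (\<rho> - complex_of_real \<sigma>) \<le> 2 * \<sigma>"
  proof -
    have "norm (\<rho> - complex_of_real \<sigma>) \<le> norm \<rho> + norm (complex_of_real \<sigma>)" by (rule norm_triangle_ineq4)
    thus ?thesis using s assms(2) by simp
  qed
  have "\<rho> - complex_of_real (1 - \<sigma>) = complex_of_real \<sigma> - (1 - \<rho>)" by (simp add: algebra_simps)
  hence "norm (\<rho> - complex_of_real (1 - \<sigma>)) \<ge> norm (complex_of_real \<sigma>) - norm (1 - \<rho>)"
    by (metis norm_triangle_ineq2)
  moreover have "norm (1 - \<rho>) \<le> 1 + norm \<rho>" by (metis norm_one norm_triangle_ineq4)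
  ultimately have num: "norm (\<rho> - complex_of_real (1 - \<sigma>)) \<ge> \<sigma> / 2" using s assms(2) by simp
  have "1/4 \<le> (\<sigma> / 2) / (2 * \<sigma>)" using s by simp
  also have "\<dots> \<le> norm (\<rho> - complex_of_real (1 - \<sigma>)) / norm (\<rho> - complex_of_real \<sigma>)"
    using num den2 dpos s by (intro frac_le) auto
  finally have q: "1/4 \<le> norm (\<rho> - complex_of_real (1 - \<sigma>)) / norm (\<rho> - complex_of_real \<sigma>)" .
  hence "1/4 \<le> min 1 (norm (\<rho> - complex_of_real (1 - \<sigma>)) / norm (\<rho> - complex_of_real \<sigma>))" by simp
  hence "(1/4) ^ (2 * m) \<le> (min 1 (norm (\<rho> - complex_of_real (1 - \<sigma>)) / norm (\<rho> - complex_of_real \<sigma>))) ^ (2 * m)"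
    by (intro power_mono) auto
  moreover have "((1::real)/4) ^ (2 * m) = (1/16) ^ m" by (simp add: power_mult power2_eq_square)
  ultimately show "(min 1 (norm (\<rho> - complex_of_real (1 - \<sigma>)) / norm (\<rho> - complex_of_real \<sigma>))) ^ (2 * m) \<ge> (1/16) ^ m"
    by simp
qed

end

context hf2 begin

lemma K0_ge1: "K0 \<ge> 1" unfolding K0_def by simp

lemma ell_S:
  assumes z: "F \<rho> = 0" "\<rho> \<notin> E" and sg: "\<sigma> \<ge> \<sigma>S"
  shows "norm (\<rho> - complex_of_real \<sigma>) > 0"
    "(min 1 (norm (\<rho> - complex_of_real (1 - \<sigma>)) / norm (\<rho> - complex_of_real \<sigma>))) ^ (2 * m)
       \<ge> exp (- (real m * (Dc * \<sigma> / (\<sigma>^2 + (norm \<rho>)^2))))"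
proof -
  define x where "x = Re \<rho>"
  define y where "y = Im \<rho>"
  have x1: "\<sigma>0 < x" "x < 1/2" using z unfolding E_def x_def by auto
  have xK: "\<bar>x\<bar> \<le> K0" using reK[OF z] unfolding x_def .
  have s1: "\<sigma> \<ge> 2 * (1 - \<sigma>0)" "\<sigma> \<ge> 2 * K0" using sg unfolding \<sigma>S_def by auto
  have s2: "\<sigma> \<ge> 2" using s1 K0_ge1 by linarith
  define na where "na = norm (\<rho> - complex_of_real (1 - \<sigma>))"
  define nb where "nb = norm (\<rho> - complex_of_real \<sigma>)"
  define Aq where "Aq = (x - (1 - \<sigma>))^2 + y^2"
  define Bq where "Bq = (x - \<sigma>)^2 + y^2"
  have Aq: "na^2 = Aq" unfolding na_def Aq_def x_def y_def by (simp add: cmod_power2)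
  have Bq: "nb^2 = Bq" unfolding nb_def Bq_def x_def y_def by (simp add: cmod_power2)
  have v: "x - (1 - \<sigma>) \<ge> \<sigma> / 2" using x1 s1 by (smt (verit) field_sum_of_halves)
  have "(\<sigma> / 2)^2 \<le> (x - (1 - \<sigma>))^2" using v s2 by (intro power_mono) auto
  hence Alow: "Aq \<ge> (\<sigma>/2)^2 + y^2" unfolding Aq_def by simp
  have sq: "(\<sigma>/2)^2 > 0" using s2 by simp
  have y2: "y^2 \<ge> 0" by simp
  have Apos: "Aq > 0" using Alow sq y2 by linarith
  have diff: "Bq - Aq = (2 * \<sigma> - 1) * (1 - 2 * x)" unfolding Aq_def Bq_def
    by (simp add: power2_eq_square algebra_simps)
  have dpos: "(2 * \<sigma> - 1) * (1 - 2 * x) > 0" using s2 x1 by (intro mult_pos_pos) auto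
  have AB: "Aq < Bq" using diff dpos by linarith
  have dle: "Bq - Aq \<le> (2 * \<sigma>) * (2 * K0)"
    unfolding diff using s2 x1 K0_def by (intro mult_mono) auto
  have "(norm \<rho>)^2 = x^2 + y^2" unfolding x_def y_def by (simp add: cmod_power2)
  also have "x^2 \<le> K0^2" using xK by (metis abs_le_square_iff abs_of_nonneg K0_pos less_imp_le power2_abs)
  also have "K0^2 \<le> (\<sigma>/2)^2" using s1 K0_pos by (intro power_mono) auto
  finally have "(norm \<rho>)^2 \<le> (\<sigma>/2)^2 + y^2" by simp
  moreover have h4: "(\<sigma>/2)^2 = \<sigma>^2 / 4" by (simp add: power_divide)
  ultimately have S5: "\<sigma>^2 + (norm \<rho>)^2 \<le> 5 * Aq" using Alow y2 by linarith
  have sq2: "\<sigma>^2 > 0" using s2 by simp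
  have r2: "(norm \<rho>)^2 \<ge> 0" by simp
  have Spos: "\<sigma>^2 + (norm \<rho>)^2 > 0" using sq2 r2 by linarith
  have "nb^2 > 0" using Bq AB Apos by simp
  hence "nb \<noteq> 0" by auto
  hence nbpos: "nb > 0" unfolding nb_def by simp
  thus "norm (\<rho> - complex_of_real \<sigma>) > 0" unfolding nb_def .
  have na0: "na \<ge> 0" unfolding na_def by simp
  have "na^2 \<le> nb^2" using Aq Bq AB by simp
  hence nab: "na \<le> nb" using na0 nbpos by (simp add: power2_le_iff_abs_le)
  define q where "q = na / nb"
  have q1: "q \<le> 1" "q \<ge> 0" unfolding q_def using nab nbpos na0 by auto
  have qsq: "q^2 = Aq / Bq" unfolding q_def using Aq Bq by (simp add: power_divide)
  define yy where "yy = (Bq - Aq) / Aq"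
  have yy0: "yy \<ge> 0" unfolding yy_def using AB Apos by simp
  have "Bq / Aq = 1 + yy" unfolding yy_def using Apos by (simp add: field_simps)
  also have "\<dots> \<le> exp yy" by (simp add: add.commute exp_ge_add_one_self)
  finally have BA: "Bq / Aq \<le> exp yy" .
  have "exp (- yy) = 1 / exp yy" by (simp add: exp_minus field_simps)
  also have "\<dots> \<le> 1 / (Bq / Aq)" using BA Apos AB by (intro divide_left_mono) auto
  also have "\<dots> = Aq / Bq" by simp
  finally have qlow: "exp (- yy) \<le> q^2" using qsq by simp
  have "yy \<le> ((2 * \<sigma>) * (2 * K0)) / Aq" unfolding yy_def using dle Apos by (intro divide_right_mono) auto
  also have "\<dots> \<le> ((2 * \<sigma>) * (2 * K0)) / ((\<sigma>^2 + (norm \<rho>)^2) / 5)"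
    using S5 Spos s2 K0_pos by (intro divide_left_mono) auto
  also have "\<dots> = Dc * \<sigma> / (\<sigma>^2 + (norm \<rho>)^2)" unfolding Dc_def by (simp add: field_simps)
  finally have yyle: "yy \<le> Dc * \<sigma> / (\<sigma>^2 + (norm \<rho>)^2)" .
  have "exp (- (real m * (Dc * \<sigma> / (\<sigma>^2 + (norm \<rho>)^2)))) \<le> exp (- (real m * yy))"
  proof -
    have "real m * yy \<le> real m * (Dc * \<sigma> / (\<sigma>^2 + (norm \<rho>)^2))"
      using yyle by (intro mult_left_mono) auto
    thus ?thesis by simp
  qed
  also have "\<dots> = exp (- yy) ^ m" by (simp add: exp_of_nat_mult[symmetric])
  also have "\<dots> \<le> (q^2) ^ m" using qlow by (intro power_mono) auto
  also have "\<dots> = (min 1 q) ^ (2 * m)" using q1 by (simp add: power_mult)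
  finally show "(min 1 (norm (\<rho> - complex_of_real (1 - \<sigma>)) / norm (\<rho> - complex_of_real \<sigma>))) ^ (2 * m)
       \<ge> exp (- (real m * (Dc * \<sigma> / (\<sigma>^2 + (norm \<rho>)^2))))"
    unfolding q_def na_def nb_def .
qed

end

context hf2 begin

lemma ws_nn: "ws \<sigma> \<rho> \<ge> 0" unfolding ws_def by (simp add: add_nonneg_nonneg)

lemma ws_le: assumes "\<rho> \<noteq> 0" shows "ws \<sigma> \<rho> \<le> w \<rho>"
proof -
  have p: "(norm \<rho>)^2 > 0" using assms by simp
  have p2: "\<sigma>^2 + (norm \<rho>)^2 > 0" using p by (simp add: add_nonneg_pos)
  have p3: "(\<sigma>^2 + (norm \<rho>)^2) * (norm \<rho>)^2 > 0" using p p2 by simp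
  have "real (zero_mult F \<rho>) / (\<sigma>^2 + (norm \<rho>)^2) \<le> real (zero_mult F \<rho>) / (norm \<rho>)^2"
    using p3 by (intro divide_left_mono) auto
  thus ?thesis unfolding ws_def w_def .
qed

lemma ws_summable: "ws \<sigma> summable_on nz_zeros F"
proof (rule dominated_summable[OF w_sum, of "{}"])
  fix \<rho> assume "\<rho> \<in> nz_zeros F - {}"
  hence "\<rho> \<noteq> 0" unfolding nz_zeros_def by auto
  thus "norm (ws \<sigma> \<rho>) \<le> 1 * w \<rho>" using ws_le[of \<rho> \<sigma>] ws_nn[of \<sigma> \<rho>] by simp
qed auto

lemma cE_pos: "cE > 0" unfolding cE_def by (intro prod_pos) auto

lemma sigma2_E: "\<rho> \<in> E \<Longrightarrow> \<sigma>2 \<ge> 2 * (norm \<rho> + 1)"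
proof -
  assume r: "\<rho> \<in> E"
  have "2 * (norm \<rho> + 1) \<le> (\<Sum>\<rho>\<in>E. 2 * (norm \<rho> + 1))"
    by (rule member_le_sum) (use r finE in auto)
  thus ?thesis unfolding \<sigma>2_def by linarith
qed

lemma sigma2_S: "\<sigma>2 \<ge> \<sigma>S" unfolding \<sigma>2_def by simp

lemma prod_bound:
  assumes Y: "finite Y" "Y \<subseteq> upper_zeros F" and sg: "\<sigma> \<ge> \<sigma>2"
  shows "cE * exp (- (Dc * \<sigma> * W \<sigma>)) * norm (\<Prod>\<rho>\<in>Y. grouped_factor F (of_real \<sigma>) \<rho>)
           \<le> norm (\<Prod>\<rho>\<in>Y. grouped_factor F (of_real (1 - \<sigma>)) \<rho>)"
proof -
  define l where "l \<rho> = (if \<rho> \<in> E then (1/16::real) ^ zero_mult F \<rho>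
                         else exp (- (real (zero_mult F \<rho>) * (Dc * \<sigma> / (\<sigma>^2 + (norm \<rho>)^2)))))" for \<rho>
  have l0: "l \<rho> \<ge> 0" for \<rho> unfolding l_def by auto
  have per: "l \<rho> * norm (grouped_factor F (of_real \<sigma>) \<rho>) \<le> norm (grouped_factor F (of_real (1 - \<sigma>)) \<rho>)"
    if r: "\<rho> \<in> Y" for \<rho>
  proof -
    have r0: "\<rho> \<noteq> 0" "F \<rho> = 0" using r Y unfolding upper_zeros_def by auto
    show ?thesis
    proof (cases "\<rho> \<in> E")
      case True
      have sgE: "\<sigma> \<ge> 2 * (norm \<rho> + 1)" using sigma2_E[OF True] sg by linarith
      note e = ell_E(1)[OF r0(1) sgE] ell_E(2)[OF r0(1) sgE, of "zero_mult F \<rho>"]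
      have "l \<rho> * norm (grouped_factor F (of_real \<sigma>) \<rho>) \<le>
             (min 1 (norm (\<rho> - of_real (1 - \<sigma>)) / norm (\<rho> - of_real \<sigma>))) ^ (2 * zero_mult F \<rho>)
               * norm (grouped_factor F (of_real \<sigma>) \<rho>)"
        unfolding l_def using True e(2) by (intro mult_right_mono) auto
      also have "\<dots> \<le> norm (grouped_factor F (of_real (1 - \<sigma>)) \<rho>)"
        by (rule ratio_factor[OF r0(1) e(1)])
      finally show ?thesis .
    next
      case False
      have sgS: "\<sigma> \<ge> \<sigma>S" using sigma2_S sg by linarith
      note e = ell_S(1)[OF r0(2) False sgS] ell_S(2)[OF r0(2) False sgS, of "zero_mult F \<rho>"]
      have "l \<rho> * norm (grouped_factor F (of_real \<sigma>) \<rho>) \<le>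
             (min 1 (norm (\<rho> - of_real (1 - \<sigma>)) / norm (\<rho> - of_real \<sigma>))) ^ (2 * zero_mult F \<rho>)
               * norm (grouped_factor F (of_real \<sigma>) \<rho>)"
        unfolding l_def using False e(2) by (intro mult_right_mono) auto
      also have "\<dots> \<le> norm (grouped_factor F (of_real (1 - \<sigma>)) \<rho>)"
        by (rule ratio_factor[OF r0(1) e(1)])
      finally show ?thesis .
    qed
  qed
  have "(\<Prod>\<rho>\<in>Y. l \<rho>) * (\<Prod>\<rho>\<in>Y. norm (grouped_factor F (of_real \<sigma>) \<rho>))
          = (\<Prod>\<rho>\<in>Y. l \<rho> * norm (grouped_factor F (of_real \<sigma>) \<rho>))" by (simp add: prod.distrib)
  also have "\<dots> \<le> (\<Prod>\<rho>\<in>Y. norm (grouped_factor F (of_real (1 - \<sigma>)) \<rho>))"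
    by (intro prod_mono) (use per l0 in auto)
  finally have main: "(\<Prod>\<rho>\<in>Y. l \<rho>) * norm (\<Prod>\<rho>\<in>Y. grouped_factor F (of_real \<sigma>) \<rho>)
        \<le> norm (\<Prod>\<rho>\<in>Y. grouped_factor F (of_real (1 - \<sigma>)) \<rho>)" by (simp add: prod_norm)
  have split: "(\<Prod>\<rho>\<in>Y. l \<rho>) = (\<Prod>\<rho>\<in>Y \<inter> E. l \<rho>) * (\<Prod>\<rho>\<in>Y - E. l \<rho>)"
    by (rule prod.Int_Diff[OF Y(1)])
  have p1: "(\<Prod>\<rho>\<in>Y \<inter> E. l \<rho>) = (\<Prod>\<rho>\<in>Y \<inter> E. (1/16::real) ^ zero_mult F \<rho>)"
    unfolding l_def by (rule prod.cong) auto
  have sub: "Y \<inter> E \<subseteq> E \<inter> upper_zeros F" using Y by auto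
  have fEU: "finite (E \<inter> upper_zeros F)" using finE by auto
  have "cE = (\<Prod>\<rho>\<in>(E \<inter> upper_zeros F) - (Y \<inter> E). (1/16::real) ^ zero_mult F \<rho>) *
             (\<Prod>\<rho>\<in>Y \<inter> E. (1/16::real) ^ zero_mult F \<rho>)"
    unfolding cE_def by (rule prod.subset_diff[OF sub fEU])
  also have "\<dots> \<le> 1 * (\<Prod>\<rho>\<in>Y \<inter> E. (1/16::real) ^ zero_mult F \<rho>)"
    by (intro mult_right_mono prod_le_1) (auto simp: power_le_one intro: prod_nonneg)
  finally have c1: "cE \<le> (\<Prod>\<rho>\<in>Y \<inter> E. l \<rho>)" using p1 by simp
  have fYE: "finite (Y - E)" using Y by auto
  have "(\<Prod>\<rho>\<in>Y - E. l \<rho>) = (\<Prod>\<rho>\<in>Y - E. exp (- (Dc * \<sigma> * ws \<sigma> \<rho>)))"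
    unfolding l_def ws_def by (rule prod.cong) (auto simp: field_simps)
  also have "\<dots> = exp (\<Sum>\<rho>\<in>Y - E. - (Dc * \<sigma> * ws \<sigma> \<rho>))" by (rule exp_sum[OF fYE, symmetric])
  also have "(\<Sum>\<rho>\<in>Y - E. - (Dc * \<sigma> * ws \<sigma> \<rho>)) = - (Dc * \<sigma> * (\<Sum>\<rho>\<in>Y - E. ws \<sigma> \<rho>))"
    by (simp add: sum_negf sum_distrib_left)
  finally have p2: "(\<Prod>\<rho>\<in>Y - E. l \<rho>) = exp (- (Dc * \<sigma> * (\<Sum>\<rho>\<in>Y - E. ws \<sigma> \<rho>)))" .
  have YEN: "Y - E \<subseteq> nz_zeros F" using Y upper_sub by auto
  have "(\<Sum>\<rho>\<in>Y - E. ws \<sigma> \<rho>) \<le> W \<sigma>"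
    unfolding W_def by (rule finite_sum_le_infsum[OF ws_summable fYE YEN]) (use ws_nn in auto)
  moreover have DS: "Dc * \<sigma> \<ge> 0"
  proof -
    have "\<sigma> \<ge> 0" using sg sigma2_S K0_pos unfolding \<sigma>S_def by linarith
    thus ?thesis unfolding Dc_def using K0_pos by simp
  qed
  ultimately have "Dc * \<sigma> * (\<Sum>\<rho>\<in>Y - E. ws \<sigma> \<rho>) \<le> Dc * \<sigma> * W \<sigma>" by (intro mult_left_mono)
  hence c2: "exp (- (Dc * \<sigma> * W \<sigma>)) \<le> (\<Prod>\<rho>\<in>Y - E. l \<rho>)" unfolding p2 by simp
  have "cE * exp (- (Dc * \<sigma> * W \<sigma>)) \<le> (\<Prod>\<rho>\<in>Y \<inter> E. l \<rho>) * (\<Prod>\<rho>\<in>Y - E. l \<rho>)"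
    using c1 c2 cE_pos by (intro mult_mono) (auto intro: prod_nonneg l0)
  hence "cE * exp (- (Dc * \<sigma> * W \<sigma>)) \<le> (\<Prod>\<rho>\<in>Y. l \<rho>)" unfolding split .
  hence "cE * exp (- (Dc * \<sigma> * W \<sigma>)) * norm (\<Prod>\<rho>\<in>Y. grouped_factor F (of_real \<sigma>) \<rho>)
          \<le> (\<Prod>\<rho>\<in>Y. l \<rho>) * norm (\<Prod>\<rho>\<in>Y. grouped_factor F (of_real \<sigma>) \<rho>)"
    by (intro mult_right_mono) auto
  with main show ?thesis by linarith
qed

lemma P_bound:
  assumes sg: "\<sigma> \<ge> \<sigma>2"
  shows "cE * exp (- (Dc * \<sigma> * W \<sigma>)) * norm (P (of_real \<sigma>)) \<le> norm (P (of_real (1 - \<sigma>)))"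
proof (rule tendsto_le)
  show "\<not> trivial_limit (finite_subsets_at_top (upper_zeros F))"
    by (simp only: eventually_False finite_subsets_at_top_neq_bot not_False_eq_True)
  show "((\<lambda>Y. norm (\<Prod>\<rho>\<in>Y. grouped_factor F (of_real (1 - \<sigma>)) \<rho>)) \<longlongrightarrow> norm (P (of_real (1 - \<sigma>))))
          (finite_subsets_at_top (upper_zeros F))"
    by (intro tendsto_norm P_lim)
  show "((\<lambda>Y. cE * exp (- (Dc * \<sigma> * W \<sigma>)) * norm (\<Prod>\<rho>\<in>Y. grouped_factor F (of_real \<sigma>) \<rho>))
          \<longlongrightarrow> cE * exp (- (Dc * \<sigma> * W \<sigma>)) * norm (P (of_real \<sigma>))) (finite_subsets_at_top (upper_zeros F))"
    by (intro tendsto_mult_left tendsto_norm P_lim)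
  show "\<forall>\<^sub>F Y in finite_subsets_at_top (upper_zeros F).
          cE * exp (- (Dc * \<sigma> * W \<sigma>)) * norm (\<Prod>\<rho>\<in>Y. grouped_factor F (of_real \<sigma>) \<rho>)
          \<le> norm (\<Prod>\<rho>\<in>Y. grouped_factor F (of_real (1 - \<sigma>)) \<rho>)"
    by (rule eventually_finite_subsets_at_top_weakI) (rule prod_bound[OF _ _ sg])
qed

end

context hf2 begin

lemma W_small:
  assumes e: "\<epsilon> > 0" shows "\<forall>\<^sub>F \<sigma> in at_top. W \<sigma> \<le> \<epsilon>"
proof -
  define Wt where "Wt = infsum w (nz_zeros F)"
  have "(sum w \<longlongrightarrow> Wt) (finite_subsets_at_top (nz_zeros F))"
    using has_sum_infsum[OF w_sum] unfolding has_sum_def Wt_def .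
  hence "eventually (\<lambda>Y. dist (sum w Y) Wt < \<epsilon>/2) (finite_subsets_at_top (nz_zeros F))"
    using e tendstoD by (metis half_gt_zero)
  then obtain Y0 where Y0: "finite Y0" "Y0 \<subseteq> nz_zeros F" "dist (sum w Y0) Wt < \<epsilon>/2"
    unfolding eventually_finite_subsets_at_top by blast
  have tail: "sum w V \<le> \<epsilon>/2" if V: "finite V" "V \<subseteq> nz_zeros F - Y0" for V
  proof -
    have "sum w (Y0 \<union> V) \<le> Wt" unfolding Wt_def
      using finite_sum_le_infsum[OF w_sum, of "Y0 \<union> V"] V Y0 w_nn by auto
    moreover have "sum w (Y0 \<union> V) = sum w Y0 + sum w V"
      by (rule sum.union_disjoint) (use V Y0 in auto)
    ultimately show ?thesis using Y0(3) unfolding dist_real_def by linarith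
  qed
  define S0 where "S0 = (\<Sum>\<rho>\<in>Y0. real (zero_mult F \<rho>))"
  have S0: "S0 \<ge> 0" unfolding S0_def by (simp add: sum_nonneg)
  show ?thesis unfolding eventually_at_top_linorder
  proof (intro exI[of _ "max 1 (2 * S0 / \<epsilon>)"] allI impI)
    fix \<sigma> :: real assume s: "\<sigma> \<ge> max 1 (2 * S0 / \<epsilon>)"
    have s1: "\<sigma> \<ge> 1" using s by simp
    have sq: "\<sigma>^2 \<ge> \<sigma>" using s1 by (simp add: power2_eq_square)
    have sqp: "\<sigma>^2 > 0" using s1 by simp
    have "2 * S0 / \<epsilon> \<le> \<sigma>^2" using s sq by linarith
    hence "S0 \<le> \<epsilon> / 2 * \<sigma>^2" using e by (simp add: field_simps)
    hence S0s: "S0 / \<sigma>^2 \<le> \<epsilon> / 2" using sqp by (simp add: field_simps)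
    have bound: "sum (ws \<sigma>) Z \<le> \<epsilon>" if Z: "finite Z" "Z \<subseteq> nz_zeros F" for Z
    proof -
      have "sum (ws \<sigma>) Z = sum (ws \<sigma>) (Z \<inter> Y0) + sum (ws \<sigma>) (Z - Y0)"
        by (rule sum.Int_Diff[OF Z(1)])
      also have "sum (ws \<sigma>) (Z \<inter> Y0) \<le> (\<Sum>\<rho>\<in>Z \<inter> Y0. real (zero_mult F \<rho>) / \<sigma>^2)"
      proof (rule sum_mono)
        fix \<rho> assume "\<rho> \<in> Z \<inter> Y0"
        have "0 < (\<sigma>^2 + (norm \<rho>)^2) * \<sigma>^2" using sqp by (simp add: add_pos_nonneg)
        thus "ws \<sigma> \<rho> \<le> real (zero_mult F \<rho>) / \<sigma>^2" unfolding ws_def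
          by (intro divide_left_mono) auto
      qed
      also have "\<dots> \<le> (\<Sum>\<rho>\<in>Y0. real (zero_mult F \<rho>) / \<sigma>^2)"
        by (rule sum_mono2) (use Y0 in auto)
      also have "\<dots> = S0 / \<sigma>^2" unfolding S0_def by (simp add: sum_divide_distrib)
      also have "sum (ws \<sigma>) (Z - Y0) \<le> sum w (Z - Y0)"
        by (rule sum_mono) (use Z ws_le in \<open>auto simp: nz_zeros_def\<close>)
      also have "\<dots> \<le> \<epsilon> / 2" by (rule tail) (use Z in auto)
      finally show ?thesis using S0s by linarith
    qed
    show "W \<sigma> \<le> \<epsilon>" unfolding W_def
    proof (rule tendsto_upperbound)
      show "(sum (ws \<sigma>) \<longlongrightarrow> infsum (ws \<sigma>) (nz_zeros F)) (finite_subsets_at_top (nz_zeros F))"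
        using has_sum_infsum[OF ws_summable] unfolding has_sum_def .
      show "\<forall>\<^sub>F Z in finite_subsets_at_top (nz_zeros F). sum (ws \<sigma>) Z \<le> \<epsilon>"
        by (rule eventually_finite_subsets_at_top_weakI) (rule bound)
      show "\<not> trivial_limit (finite_subsets_at_top (nz_zeros F))"
        by (simp only: eventually_False finite_subsets_at_top_neq_bot not_False_eq_True)
    qed
  qed
qed

lemma B_nonneg:
  assumes nzev: "\<forall>\<^sub>F \<sigma> in at_top. F (complex_of_real \<sigma>) \<noteq> 0 \<and> F (complex_of_real (1 - \<sigma>)) \<noteq> 0"
    and lim: "((\<lambda>\<sigma>::real. F (complex_of_real (1 - \<sigma>)) / F (complex_of_real \<sigma>)) \<longlongrightarrow> 0) at_top"
    and creal: "Im (b + T) = 0"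
  shows "Re (b + T) \<ge> 0"
proof (rule ccontr)
  define B' where "B' = Re (b + T)"
  assume "\<not> Re (b + T) \<ge> 0"
  hence Bn: "B' < 0" unfolding B'_def by simp
  have cB: "b + T = complex_of_real B'" using creal by (simp add: complex_eq_iff B'_def)
  define \<kappa> where "\<kappa> = (1/2::real) ^ m0 * cE"
  have \<kappa>: "\<kappa> > 0" unfolding \<kappa>_def using cE_pos by simp
  have Dcpos: "Dc > 0" unfolding Dc_def using K0_pos by simp
  have ev1: "\<forall>\<^sub>F \<sigma> in at_top. W \<sigma> \<le> - B' / Dc" by (rule W_small) (use divide_neg_pos[OF Bn Dcpos] in simp)
  have "((\<lambda>\<sigma>::real. norm (F (complex_of_real (1 - \<sigma>)) / F (complex_of_real \<sigma>))) \<longlongrightarrow> norm (0::complex)) at_top"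
    by (rule tendsto_norm[OF lim])
  hence ev2: "\<forall>\<^sub>F \<sigma> in at_top. norm (F (complex_of_real (1 - \<sigma>)) / F (complex_of_real \<sigma>)) < \<kappa>"
    using \<kappa> order_tendstoD(2) by fastforce
  have ev3: "\<forall>\<^sub>F \<sigma> in at_top. \<sigma> \<ge> max \<sigma>2 2" by (rule eventually_ge_at_top)
  have "\<forall>\<^sub>F \<sigma> in at_top. (F (complex_of_real \<sigma>) \<noteq> 0 \<and> F (complex_of_real (1 - \<sigma>)) \<noteq> 0) \<and>
          W \<sigma> \<le> - B' / Dc \<and> norm (F (complex_of_real (1 - \<sigma>)) / F (complex_of_real \<sigma>)) < \<kappa> \<and> \<sigma> \<ge> max \<sigma>2 2"
    using nzev ev1 ev2 ev3 by eventually_elim blast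
  then obtain \<sigma> where s: "F (complex_of_real \<sigma>) \<noteq> 0" "F (complex_of_real (1 - \<sigma>)) \<noteq> 0"
     "W \<sigma> \<le> - B' / Dc" "norm (F (complex_of_real (1 - \<sigma>)) / F (complex_of_real \<sigma>)) < \<kappa>" "\<sigma> \<ge> max \<sigma>2 2"
    unfolding eventually_at_top_linorder by (meson order_refl)
  have s2: "\<sigma> \<ge> 2" "\<sigma> \<ge> \<sigma>2" using s(5) by auto
  define s1 where "s1 = complex_of_real (1 - \<sigma>)"
  define s0 where "s0 = complex_of_real \<sigma>"
  define A1 where "A1 = exp (Re a)"
  define n1 where "n1 = norm (P s1)"
  define n0 where "n0 = norm (P s0)"
  have A1: "A1 > 0" unfolding A1_def by simp
  have N1: "norm (F s1) = A1 * (\<sigma> - 1) ^ m0 * exp (B' * (1 - \<sigma>)) * n1"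
  proof -
    have "norm (F s1) = norm (exp a) * norm s1 ^ m0 * norm (exp ((b + T) * s1)) * n1"
      unfolding F_repr[of s1] n1_def by (simp add: norm_mult norm_power)
    moreover have "norm s1 = \<sigma> - 1" unfolding s1_def norm_of_real using s2 by simp
    moreover have "(b + T) * s1 = complex_of_real (B' * (1 - \<sigma>))" unfolding cB s1_def by simp
    ultimately show ?thesis unfolding A1_def by simp
  qed
  have N0: "norm (F s0) = A1 * \<sigma> ^ m0 * exp (B' * \<sigma>) * n0"
  proof -
    have "norm (F s0) = norm (exp a) * norm s0 ^ m0 * norm (exp ((b + T) * s0)) * n0"
      unfolding F_repr[of s0] n0_def by (simp add: norm_mult norm_power)
    moreover have "norm s0 = \<sigma>" unfolding s0_def using s2 by simp
    moreover have "(b + T) * s0 = complex_of_real (B' * \<sigma>)" unfolding cB s0_def by simp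
    ultimately show ?thesis unfolding A1_def by simp
  qed
  have n0: "n0 > 0"
  proof -
    have "norm (F s0) > 0" using s(1) unfolding s0_def by simp
    thus ?thesis using N0 n0_def by (metis mult_zero_right norm_ge_zero order_less_irrefl less_eq_real_def)
  qed
  have "B' * \<sigma> \<le> - (Dc * \<sigma> * W \<sigma>)"
  proof -
    have "Dc * W \<sigma> \<le> Dc * (- B' / Dc)" using s(3) Dcpos by (intro mult_left_mono) auto
    hence "Dc * W \<sigma> \<le> - B'" using Dcpos by simp
    hence "(Dc * W \<sigma>) * \<sigma> \<le> (- B') * \<sigma>" using s2 by (intro mult_right_mono) auto
    thus ?thesis by (simp add: algebra_simps)
  qed
  hence "cE * exp (B' * \<sigma>) * n0 \<le> cE * exp (- (Dc * \<sigma> * W \<sigma>)) * n0"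
    using cE_pos n0 by (intro mult_right_mono mult_left_mono) auto
  also have "\<dots> \<le> n1" unfolding n1_def n0_def s1_def s0_def by (rule P_bound[OF s2(2)])
  finally have n1ge: "cE * exp (B' * \<sigma>) * n0 \<le> n1" .
  have "(\<sigma> / 2) ^ m0 \<le> (\<sigma> - 1) ^ m0" using s2 by (intro power_mono) auto
  hence pw: "(1/2) ^ m0 * \<sigma> ^ m0 \<le> (\<sigma> - 1) ^ m0" by (simp add: power_divide)
  have "((1/2) ^ m0 * \<sigma> ^ m0) * (cE * exp (B' * \<sigma>) * n0) \<le> (\<sigma> - 1) ^ m0 * n1"
    using pw n1ge cE_pos n0 s2 by (intro mult_mono) auto
  hence "A1 * exp (B' * (1 - \<sigma>)) * (((1/2) ^ m0 * \<sigma> ^ m0) * (cE * exp (B' * \<sigma>) * n0))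
          \<le> A1 * exp (B' * (1 - \<sigma>)) * ((\<sigma> - 1) ^ m0 * n1)"
    using A1 by (intro mult_left_mono) auto
  hence low: "\<kappa> * exp (B' * (1 - \<sigma>)) * (A1 * \<sigma> ^ m0 * exp (B' * \<sigma>) * n0) \<le> norm (F s1)"
    unfolding N1 \<kappa>_def by (simp add: mult_ac)
  have den: "A1 * \<sigma> ^ m0 * exp (B' * \<sigma>) * n0 > 0" using A1 n0 s2 by simp
  have "\<kappa> \<le> \<kappa> * exp (B' * (1 - \<sigma>))"
  proof -
    have "B' * (1 - \<sigma>) \<ge> 0" using Bn s2 by (intro mult_nonpos_nonpos) auto
    hence "exp (B' * (1 - \<sigma>)) \<ge> 1" by simp
    thus ?thesis using \<kappa> by simp
  qed
  also have "\<dots> \<le> norm (F s1) / norm (F s0)"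
    unfolding N0 using low den by (simp add: field_simps)
  also have "\<dots> = norm (F s1 / F s0)" by (simp add: norm_divide)
  finally have "\<kappa> \<le> norm (F s1 / F s0)" .
  thus False using s(4) unfolding s1_def s0_def by simp
qed

end

theorem lemma1:
  fixes F :: "complex \<Rightarrow> complex"
  assumes genus: "genus_le_one F"
    and real_on_real: "\<forall>x::real. F (complex_of_real x) \<in> \<real>"
    and strip: "\<exists>\<sigma>0::real. finite {\<rho>. F \<rho> = 0 \<and> \<not> (\<sigma>0 < Re \<rho> \<and> Re \<rho> < 1/2)}"
    and halfplane: "finite {\<rho>. F \<rho> = 0 \<and> Re \<rho> \<ge> 1/2}"
    and count: "\<exists>C>0. \<forall>\<^sub>F T in at_top. real (zero_count F T) \<le> C * T * ln T"
    and ratio_pos: "\<forall>\<^sub>F \<sigma> in at_top.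
         F (complex_of_real (1 - \<sigma>)) / F (complex_of_real \<sigma>) \<in> \<real> \<and>
         Re (F (complex_of_real (1 - \<sigma>)) / F (complex_of_real \<sigma>)) > 0"
    and ratio_lim: "((\<lambda>\<sigma>::real. F (complex_of_real (1 - \<sigma>)) / F (complex_of_real \<sigma>)) \<longlongrightarrow> 0) at_top"
  shows "\<exists>(C'::complex) (m::nat) (B'::real) (P::complex \<Rightarrow> complex). B' \<ge> 0 \<and>
           (\<forall>s. (\<lambda>\<rho>. norm (grouped_factor F s \<rho> - 1)) summable_on upper_zeros F) \<and>
           (\<forall>K. compact K \<longrightarrow>
              uniform_limit K (\<lambda>X s. \<Prod>\<rho>\<in>X. grouped_factor F s \<rho>) P
                (finite_subsets_at_top (upper_zeros F))) \<and>
           (\<forall>s. F s = C' * s ^ m * exp (complex_of_real B' * s) * P s)"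
proof -
  have hol: "F holomorphic_on UNIV"
    and wsum: "(\<lambda>\<rho>. real (zero_mult F \<rho>) / (norm \<rho>)\<^sup>2) summable_on nz_zeros F"
    using genus unfolding genus_le_one_def by auto
  obtain a b :: complex and m0 :: nat and Q :: "complex \<Rightarrow> complex" where
    aQ: "\<And>s. set_prod_conv (\<lambda>\<rho>. ((1 - s / \<rho>) * exp (s / \<rho>)) ^ zero_mult F \<rho>) (nz_zeros F) (Q s)"
        "\<And>s. F s = exp (a + b * s) * s ^ m0 * Q s"
    using genus unfolding genus_le_one_def by blast
  obtain \<sigma>0 :: real where s0: "finite {\<rho>. F \<rho> = 0 \<and> \<not> (\<sigma>0 < Re \<rho> \<and> Re \<rho> < 1/2)}"
    using strip by blast
  interpret hf2 F \<sigma>0 a b m0 Q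
    by unfold_locales (use hol wsum real_on_real s0 aQ in auto)
  have nzev: "\<forall>\<^sub>F \<sigma> in at_top. F (complex_of_real \<sigma>) \<noteq> 0 \<and> F (complex_of_real (1 - \<sigma>)) \<noteq> 0"
    using ratio_pos by eventually_elim auto
  have ev0: "\<forall>\<^sub>F \<sigma> in at_top. F (complex_of_real \<sigma>) \<noteq> 0"
    using nzev by eventually_elim auto
  have cr: "Im (b + T) = 0" by (rule c_real[OF ev0])
  have Bn: "Re (b + T) \<ge> 0" by (rule B_nonneg[OF nzev ratio_lim cr])
  have cB: "complex_of_real (Re (b + T)) = b + T" using cr by (simp add: complex_eq_iff)
  show ?thesis
  proof (intro exI[of _ "exp a"] exI[of _ m0] exI[of _ "Re (b + T)"] exI[of _ P] conjI allI impI)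
    show "Re (b + T) \<ge> 0" by (rule Bn)
    fix s show "(\<lambda>\<rho>. norm (grouped_factor F s \<rho> - 1)) summable_on upper_zeros F" by (rule g_summable)
  next
    fix K :: "complex set" assume "compact K"
    thus "uniform_limit K (\<lambda>X s. \<Prod>\<rho>\<in>X. grouped_factor F s \<rho>) P (finite_subsets_at_top (upper_zeros F))"
      by (rule g_unif)
  next
    fix s show "F s = exp a * s ^ m0 * exp (complex_of_real (Re (b + T)) * s) * P s"
      unfolding cB by (rule F_repr)
  qed
qed

end
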